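(* For every set of formulas $\Gamma$ and every formula $\varphi$: if $\Gamma\vdash_{\mathsf{iSLH}}\varphi$, then there is a finite multiset $\Gamma'$ whose elements all belong to $\Gamma$ such that the sequent $\Gamma'\Rightarrow\varphi$ is provable in $\mathsf{G4iSLt}$.
   Context: Formulas are built by the grammar $\varphi ::= p \mid \bot \mid \varphi\land\varphi \mid \varphi\lor\varphi \mid \varphi\to\varphi \mid \Box\varphi$, with $p$ ranging over a countably infinite set of propositional variables. For a multiset $\Gamma$, $\Box\Gamma=\{\Box\psi:\psi\in\Gamma\}$; a boxed formula is one of the form $\Box\psi$. The generalised Hilbert calculus $\mathsf{iSLH}$ derives expressions $\Gamma\vdash\varphi$ ($\Gamma$ a set of formulas) by the rules: (Ax) $\Gamma\vdash\varphi$ whenever $\varphi$ is an instance of an axiom; (El) $\Gamma\vdash\varphi$ whenever $\varphi\in\Gamma$; (Nec) from $\emptyset\vdash\varphi$ infer $\Gamma\vdash\Box\varphi$; (MP) from $\Gamma\vdash\varphi$ and $\Gamma\vdash\varphi\to\psi$ infer $\Gamma\vdash\psi$. The axioms are all instances of: $\varphi\to(\psi\to\varphi)$; $(\varphi\to(\psi\to\chi))\to((\varphi\to\psi)\to(\varphi\to\chi))$; $\varphi\to(\varphi\lor\psi)$; $\psi\to(\varphi\lor\psi)$; $(\varphi\to\chi)\to((\psi\to\chi)\to((\varphi\lor\psi)\to\chi))$; $(\varphi\land\psi)\to\varphi$; $(\varphi\land\psi)\to\psi$; $(\varphi\to\psi)\to((\varphi\to\chi)\to(\varphi\to(\psi\land\chi)))$;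 $\bot\to\varphi$; $\Box(\varphi\to\psi)\to(\Box\varphi\to\Box\psi)$; $(\Box\varphi\to\varphi)\to\varphi$. A sequent is $\Gamma\Rightarrow\chi$ with $\Gamma$ a finite multiset of formulas and $\chi$ a formula. The sequent calculus $\mathsf{G4iSLt}$ has the following rules, where $p$ is a propositional variable and $\Phi$ always denotes a multiset containing no boxed formula: (⊥L) $\bot,\Gamma\Rightarrow\chi$ (no premise); (IdP) $\Gamma,p\Rightarrow p$ (no premise); (∧L) from $\Gamma,\varphi,\psi\Rightarrow\chi$ infer $\Gamma,\varphi\land\psi\Rightarrow\chi$; (∧R) from $\Gamma\Rightarrow\varphi$ and $\Gamma\Rightarrow\psi$ infer $\Gamma\Rightarrow\varphi\land\psi$; (∨L) from $\Gamma,\varphi\Rightarrow\chi$ and $\Gamma,\psi\Rightarrow\chi$ infer $\Gamma,\varphi\lor\psi\Rightarrow\chi$; (∨R$_i$), $i\in\{1,2\}$: from $\Gamma\Rightarrow\varphi_i$ infer $\Gamma\Rightarrow\varphi_1\lor\varphi_2$; (p→L) from $\Gamma,p,\varphi\Rightarrow\chi$ infer $\Gamma,p,p\to\varphi\Rightarrow\chi$; (→R) from $\Gamma,\varphi\Rightarrow\psi$ infer $\Gamma\Rightarrow\varphi\to\psi$; (□→L) from $\Phi,\Gamma,\psi,\Box\varphi\Rightarrow\varphi$ and $\Phi,\Box\Gamma,\psi\Rightarrow\chi$ infer $\Phi,\Box\Gamma,\Box\varphi\to\psi\Rightarrow\chi$; (SLtR) from $\Phi,\Gamma,\Box\varphi\Rightarrow\varphi$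 infer $\Phi,\Box\Gamma\Rightarrow\Box\varphi$; (∧→L) from $\Gamma,\varphi\to(\psi\to\chi)\Rightarrow\delta$ infer $\Gamma,(\varphi\land\psi)\to\chi\Rightarrow\delta$; (∨→L) from $\Gamma,\varphi\to\chi,\psi\to\chi\Rightarrow\delta$ infer $\Gamma,(\varphi\lor\psi)\to\chi\Rightarrow\delta$; (→→L) from $\Gamma,\psi\to\chi\Rightarrow\varphi\to\psi$ and $\Gamma,\chi\Rightarrow\delta$ infer $\Gamma,(\varphi\to\psi)\to\chi\Rightarrow\delta$. A proof of a sequent $S$ is a finite tree of sequents with root $S$ in which each interior node together with its children forms an instance of a rule (conclusion, premises) and each leaf is the conclusion of a premise-free rule; $S$ is provable if it has a proof. *)

theory Defs
  imports Main "HOL-Library.Multiset"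
begin

datatype form =
    Var nat
  | Bot
  | And form form
  | Or form form
  | Imp form form
  | Box form

definition is_box :: "form \<Rightarrow> bool" where
  "is_box f \<longleftrightarrow> (\<exists>g. f = Box g)"

definition boxfree :: "form multiset \<Rightarrow> bool" where
  "boxfree \<Phi> \<longleftrightarrow> (\<forall>f\<in>#\<Phi>. \<not> is_box f)"

definition box_ms :: "form multiset \<Rightarrow> form multiset" where
  "box_ms \<Gamma> = image_mset Box \<Gamma>"

inductive axiom :: "form \<Rightarrow> bool" where
  A1: "axiom (Imp \<phi> (Imp \<psi> \<phi>))"
| A2: "axiom (Imp (Imp \<phi> (Imp \<psi> \<chi>)) (Imp (Imp \<phi> \<psi>) (Imp \<phi> \<chi>)))"
| A3: "axiom (Imp \<phi> (Or \<phi> \<psi>))"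
| A4: "axiom (Imp \<psi> (Or \<phi> \<psi>))"
| A5: "axiom (Imp (Imp \<phi> \<chi>) (Imp (Imp \<psi> \<chi>) (Imp (Or \<phi> \<psi>) \<chi>)))"
| A6: "axiom (Imp (And \<phi> \<psi>) \<phi>)"
| A7: "axiom (Imp (And \<phi> \<psi>) \<psi>)"
| A8: "axiom (Imp (Imp \<phi> \<psi>) (Imp (Imp \<phi> \<chi>) (Imp \<phi> (And \<psi> \<chi>))))"
| A9: "axiom (Imp Bot \<phi>)"
| AK: "axiom (Imp (Box (Imp \<phi> \<psi>)) (Imp (Box \<phi>) (Box \<psi>)))"
| AGL: "axiom (Imp (Imp (Box \<phi>) \<phi>) \<phi>)"

inductive iSLH :: "form set \<Rightarrow> form \<Rightarrow> bool" where
  Ax: "axiom \<phi> \<Longrightarrow> iSLH \<Gamma> \<phi>"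
| El: "\<phi> \<in> \<Gamma> \<Longrightarrow> iSLH \<Gamma> \<phi>"
| Nec: "iSLH {} \<phi> \<Longrightarrow> iSLH \<Gamma> (Box \<phi>)"
| MP: "iSLH \<Gamma> \<phi> \<Longrightarrow> iSLH \<Gamma> (Imp \<phi> \<psi>) \<Longrightarrow> iSLH \<Gamma> \<psi>"

inductive G4iSLt :: "form multiset \<Rightarrow> form \<Rightarrow> bool" where
  BotL: "G4iSLt (add_mset Bot \<Gamma>) \<chi>"
| IdP: "G4iSLt (add_mset (Var p) \<Gamma>) (Var p)"
| AndL: "G4iSLt (add_mset \<phi> (add_mset \<psi> \<Gamma>)) \<chi> \<Longrightarrow> G4iSLt (add_mset (And \<phi> \<psi>) \<Gamma>) \<chi>"
| AndR: "G4iSLt \<Gamma> \<phi> \<Longrightarrow> G4iSLt \<Gamma> \<psi> \<Longrightarrow> G4iSLt \<Gamma> (And \<phi> \<psi>)"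
| OrL: "G4iSLt (add_mset \<phi> \<Gamma>) \<chi> \<Longrightarrow> G4iSLt (add_mset \<psi> \<Gamma>) \<chi>
         \<Longrightarrow> G4iSLt (add_mset (Or \<phi> \<psi>) \<Gamma>) \<chi>"
| OrR1: "G4iSLt \<Gamma> \<phi> \<Longrightarrow> G4iSLt \<Gamma> (Or \<phi> \<psi>)"
| OrR2: "G4iSLt \<Gamma> \<psi> \<Longrightarrow> G4iSLt \<Gamma> (Or \<phi> \<psi>)"
| VarImpL: "G4iSLt (add_mset (Var p) (add_mset \<phi> \<Gamma>)) \<chi>
         \<Longrightarrow> G4iSLt (add_mset (Var p) (add_mset (Imp (Var p) \<phi>) \<Gamma>)) \<chi>"
| ImpR: "G4iSLt (add_mset \<phi> \<Gamma>) \<psi> \<Longrightarrow> G4iSLt \<Gamma> (Imp \<phi> \<psi>)"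
| BoxImpL: "boxfree \<Phi> \<Longrightarrow>
         G4iSLt (\<Phi> + \<Gamma> + {#\<psi>, Box \<phi>#}) \<phi> \<Longrightarrow>
         G4iSLt (\<Phi> + box_ms \<Gamma> + {#\<psi>#}) \<chi> \<Longrightarrow>
         G4iSLt (\<Phi> + box_ms \<Gamma> + {#Imp (Box \<phi>) \<psi>#}) \<chi>"
| SLtR: "boxfree \<Phi> \<Longrightarrow>
         G4iSLt (\<Phi> + \<Gamma> + {#Box \<phi>#}) \<phi> \<Longrightarrow>
         G4iSLt (\<Phi> + box_ms \<Gamma>) (Box \<phi>)"
| AndImpL: "G4iSLt (add_mset (Imp \<phi> (Imp \<psi> \<chi>)) \<Gamma>) \<delta>
         \<Longrightarrow> G4iSLt (add_mset (Imp (And \<phi> \<psi>) \<chi>) \<Gamma>) \<delta>"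
| OrImpL: "G4iSLt (add_mset (Imp \<phi> \<chi>) (add_mset (Imp \<psi> \<chi>) \<Gamma>)) \<delta>
         \<Longrightarrow> G4iSLt (add_mset (Imp (Or \<phi> \<psi>) \<chi>) \<Gamma>) \<delta>"
| ImpImpL: "G4iSLt (add_mset (Imp \<psi> \<chi>) \<Gamma>) (Imp \<phi> \<psi>) \<Longrightarrow>
         G4iSLt (add_mset \<chi> \<Gamma>) \<delta> \<Longrightarrow>
         G4iSLt (add_mset (Imp (Imp \<phi> \<psi>) \<chi>) \<Gamma>) \<delta>"

end

theory Submission
  imports Defs
begin

fun unbox :: "form \<Rightarrow> form" where
  "unbox (Box g) = g" | "unbox f = f"

definition nb :: "form multiset \<Rightarrow> form multiset" where
  "nb S = filter_mset (\<lambda>f. \<not> is_box f) S"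
definition ub :: "form multiset \<Rightarrow> form multiset" where
  "ub S = image_mset unbox (filter_mset is_box S)"

lemma is_box_simps[simp]: "is_box (Box g)" "\<not> is_box (Var p)" "\<not> is_box Bot"
  "\<not> is_box (And a b)" "\<not> is_box (Or a b)" "\<not> is_box (Imp a b)"
  by (auto simp: is_box_def)

lemma nb_add[simp]: "nb (add_mset F S) = (if is_box F then nb S else add_mset F (nb S))"
  by (simp add: nb_def)
lemma ub_add[simp]: "ub (add_mset F S) = (if is_box F then add_mset (unbox F) (ub S) else ub S)"
  by (simp add: ub_def)
lemma nb_plus[simp]: "nb (S + T) = nb S + nb T" by (simp add: nb_def)
lemma ub_plus[simp]: "ub (S + T) = ub S + ub T" by (simp add: ub_def)
lemma nb_empty[simp]: "nb {#} = {#}" by (simp add: nb_def)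
lemma ub_empty[simp]: "ub {#} = {#}" by (simp add: ub_def)

lemma box_ms_simps[simp]: "box_ms {#} = {#}" "box_ms (add_mset g G) = add_mset (Box g) (box_ms G)"
  "box_ms (G + H) = box_ms G + box_ms H"
  by (auto simp: box_ms_def)

lemma boxfree_simps[simp]: "boxfree {#}" "boxfree (add_mset F S) = (\<not> is_box F \<and> boxfree S)"
  "boxfree (S + T) = (boxfree S \<and> boxfree T)"
  by (auto simp: boxfree_def)

lemma nb_box_ms[simp]: "nb (box_ms G) = {#}" by (induction G) auto
lemma ub_box_ms[simp]: "ub (box_ms G) = G" by (induction G) auto
lemma nb_boxfree[simp]: "boxfree P \<Longrightarrow> nb P = P" by (induction P) auto
lemma ub_boxfree[simp]: "boxfree P \<Longrightarrow> ub P = {#}" by (induction P) auto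
lemma boxfree_nb[simp]: "boxfree (nb S)" by (induction S) auto

lemma decomp: "S = nb S + box_ms (ub S)"
proof (induction S)
  case empty then show ?case by simp
next
  case (add x S)
  then show ?case by (cases x) (auto simp: is_box_def)
qed

lemma SLtR_gen: "G4iSLt (nb S + ub S + {#Box \<phi>#}) \<phi> \<Longrightarrow> G4iSLt S (Box \<phi>)"
  using G4iSLt.SLtR[of "nb S" "ub S" \<phi>] decomp[of S] by simp

lemma BoxImpL_gen: "G4iSLt (nb S + ub S + {#\<psi>, Box \<phi>#}) \<phi> \<Longrightarrow> G4iSLt (add_mset \<psi> S) \<chi>
   \<Longrightarrow> G4iSLt (add_mset (Imp (Box \<phi>) \<psi>) S) \<chi>"
  using G4iSLt.BoxImpL[of "nb S" "ub S" \<psi> \<phi> \<chi>] decomp[of S] by simp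

lemma weak: "G4iSLt S C \<Longrightarrow> G4iSLt (add_mset A S) C"
proof (induction arbitrary: A rule: G4iSLt.induct)
  case (BotL \<Gamma> \<chi>)
  then show ?case by (metis G4iSLt.BotL add_mset_commute)
next
  case (IdP p \<Gamma>)
  then show ?case by (metis G4iSLt.IdP add_mset_commute)
next
  case (AndL \<phi> \<psi> \<Gamma> \<chi>)
  then show ?case by (metis G4iSLt.AndL add_mset_commute)
next
  case (AndR \<Gamma> \<phi> \<psi>)
  then show ?case by (metis G4iSLt.AndR)
next
  case (OrL \<phi> \<Gamma> \<chi> \<psi>)
  then show ?case by (metis G4iSLt.OrL add_mset_commute)
next
  case (OrR1 \<Gamma> \<phi> \<psi>)
  then show ?case by (metis G4iSLt.OrR1)
next
  case (OrR2 \<Gamma> \<psi> \<phi>)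
  then show ?case by (metis G4iSLt.OrR2)
next
  case (VarImpL p \<phi> \<Gamma> \<chi>)
  then show ?case by (metis G4iSLt.VarImpL add_mset_commute)
next
  case (ImpR \<phi> \<Gamma> \<psi>)
  then show ?case by (metis G4iSLt.ImpR add_mset_commute)
next
  case (BoxImpL \<Phi> \<Gamma> \<psi> \<phi> \<chi>)
  let ?S = "add_mset A (\<Phi> + box_ms \<Gamma>)"
  have 1: "G4iSLt (nb ?S + ub ?S + {#\<psi>, Box \<phi>#}) \<phi>"
    using BoxImpL.IH(1)[of "if is_box A then unbox A else A"] BoxImpL.hyps(1)
    by (auto simp: add.assoc add_mset_commute)
  have 2: "G4iSLt (add_mset \<psi> ?S) \<chi>"
    using BoxImpL.IH(2)[of A] by (simp add: add_mset_commute)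
  show ?case using BoxImpL_gen[OF 1 2] by (simp add: add_mset_commute)
next
  case (SLtR \<Phi> \<Gamma> \<phi>)
  let ?S = "add_mset A (\<Phi> + box_ms \<Gamma>)"
  have 1: "G4iSLt (nb ?S + ub ?S + {#Box \<phi>#}) \<phi>"
    using SLtR.IH[of "if is_box A then unbox A else A"] SLtR.hyps(1)
    by (auto simp: add.assoc add_mset_commute)
  show ?case using SLtR_gen[OF 1] by simp
next
  case (AndImpL \<phi> \<psi> \<chi> \<Gamma> \<delta>)
  then show ?case by (metis G4iSLt.AndImpL add_mset_commute)
next
  case (OrImpL \<phi> \<chi> \<psi> \<Gamma> \<delta>)
  then show ?case by (metis G4iSLt.OrImpL add_mset_commute)
next
  case (ImpImpL \<psi> \<chi> \<Gamma> \<phi> \<delta>)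
  then show ?case by (metis G4iSLt.ImpImpL add_mset_commute)
qed

lemma weak_plus: "G4iSLt S C \<Longrightarrow> G4iSLt (S + T) C"
  by (induction T) (auto simp: weak)


lemma add_neq_split: "add_mset X G = add_mset Y T \<Longrightarrow> X \<noteq> Y \<Longrightarrow> \<exists>G0. G = add_mset Y G0 \<and> T = add_mset X G0"
  by (simp add: add_eq_conv_ex)

lemma box_in_decomp: assumes "boxfree P" "P + box_ms G = add_mset (Box b) T"
  shows "b \<in># G \<and> T = P + box_ms (G - {#b#})"
proof -
  have "Box b \<in># P + box_ms G" unfolding assms(2) by simp
  moreover have "Box b \<notin># P" using assms(1) by (auto simp: boxfree_def)
  ultimately have "Box b \<in># box_ms G" by simp
  then have bG: "b \<in># G" by (auto simp: box_ms_def)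
  then have "add_mset b (G - {#b#}) = G" by simp
  then have "box_ms G = add_mset (Box b) (box_ms (G - {#b#}))"
    by (metis box_ms_simps(2))
  then have "add_mset (Box b) T = add_mset (Box b) (P + box_ms (G - {#b#}))"
    using assms(2) by simp
  with bG show ?thesis by simp
qed

lemma nonbox_in_decomp: assumes "boxfree P" "P + box_ms G = add_mset F T" "\<not> is_box F"
  shows "F \<in># P \<and> T = (P - {#F#}) + box_ms G"
proof -
  have "F \<in># P + box_ms G" unfolding assms(2) by simp
  moreover have "F \<notin># box_ms G" using assms(3) by (auto simp: box_ms_def)
  ultimately have FP: "F \<in># P" by simp
  then have "add_mset F (P - {#F#}) = P" by simp
  then have "add_mset F T = add_mset F ((P - {#F#}) + box_ms G)"
    using assms(2) by (metis union_mset_add_mset_left)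
  then have "T = (P - {#F#}) + box_ms G" by (simp only: add_mset_add_mset_same_iff)
  with FP show ?thesis by simp
qed

lemma unboxL_aux: "G4iSLt S C \<Longrightarrow> S = add_mset (Box b) T \<Longrightarrow> G4iSLt (add_mset b T) C"
proof (induction arbitrary: b T rule: G4iSLt.induct)
  case (BotL \<Gamma> \<chi>)
  from add_neq_split[OF BotL.prems] obtain G0 where "T = add_mset Bot G0" by auto
  then show ?case by (metis G4iSLt.BotL add_mset_commute)
next
  case (IdP p \<Gamma>)
  from add_neq_split[OF IdP.prems] obtain G0 where "T = add_mset (Var p) G0" by auto
  then show ?case by (metis G4iSLt.IdP add_mset_commute)
next
  case (AndL \<phi> \<psi> \<Gamma> \<chi>)
  from add_neq_split[OF AndL.prems] obtain G0 where G: "\<Gamma> = add_mset (Box b) G0" "T = add_mset (And \<phi> \<psi>) G0" by auto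
  have "G4iSLt (add_mset b (add_mset \<phi> (add_mset \<psi> G0))) \<chi>"
    using AndL.IH[of b "add_mset \<phi> (add_mset \<psi> G0)"] G by (simp add: add_mset_commute)
  then have "G4iSLt (add_mset (And \<phi> \<psi>) (add_mset b G0)) \<chi>" by (intro G4iSLt.AndL) (simp add: add_mset_commute)
  then show ?case using G by (simp add: add_mset_commute)
next
  case (AndR \<Gamma> \<phi> \<psi>)
  then show ?case by (intro G4iSLt.AndR) auto
next
  case (OrL \<phi> \<Gamma> \<chi> \<psi>)
  from add_neq_split[OF OrL.prems] obtain G0 where G: "\<Gamma> = add_mset (Box b) G0" "T = add_mset (Or \<phi> \<psi>) G0" by auto
  have "G4iSLt (add_mset b (add_mset \<phi> G0)) \<chi>"
    using OrL.IH(1)[of b "add_mset \<phi> G0"] G by (simp add: add_mset_commute)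
  moreover have "G4iSLt (add_mset b (add_mset \<psi> G0)) \<chi>"
    using OrL.IH(2)[of b "add_mset \<psi> G0"] G by (simp add: add_mset_commute)
  ultimately have "G4iSLt (add_mset (Or \<phi> \<psi>) (add_mset b G0)) \<chi>" by (intro G4iSLt.OrL) (simp_all add: add_mset_commute)
  then show ?case using G by (simp add: add_mset_commute)
next
  case (OrR1 \<Gamma> \<phi> \<psi>)
  then show ?case by (intro G4iSLt.OrR1) auto
next
  case (OrR2 \<Gamma> \<psi> \<phi>)
  then show ?case by (intro G4iSLt.OrR2) auto
next
  case (VarImpL p \<phi> \<Gamma> \<chi>)
  from add_neq_split[OF VarImpL.prems] obtain G1 where G1: "add_mset (Imp (Var p) \<phi>) \<Gamma> = add_mset (Box b) G1" "T = add_mset (Var p) G1" by auto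
  from add_neq_split[OF G1(1)] obtain G0 where G: "\<Gamma> = add_mset (Box b) G0" "G1 = add_mset (Imp (Var p) \<phi>) G0" by auto
  have "G4iSLt (add_mset b (add_mset (Var p) (add_mset \<phi> G0))) \<chi>"
    using VarImpL.IH[of b "add_mset (Var p) (add_mset \<phi> G0)"] G by (simp add: add_mset_commute)
  then have "G4iSLt (add_mset (Var p) (add_mset (Imp (Var p) \<phi>) (add_mset b G0))) \<chi>" by (intro G4iSLt.VarImpL) (simp add: add_mset_commute)
  then show ?case using G G1 by (simp add: add_mset_commute)
next
  case (ImpR \<phi> \<Gamma> \<psi>)
  have "G4iSLt (add_mset b (add_mset \<phi> T)) \<psi>" using ImpR.IH[of b "add_mset \<phi> T"] ImpR.prems by (simp add: add_mset_commute)
  then show ?case by (intro G4iSLt.ImpR) (simp add: add_mset_commute)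
next
  case (BoxImpL \<Phi> \<Gamma> \<psi> \<phi> \<chi>)
  from BoxImpL.prems have "add_mset (Imp (Box \<phi>) \<psi>) (\<Phi> + box_ms \<Gamma>) = add_mset (Box b) T" by simp
  from add_neq_split[OF this] obtain G1 where G1: "\<Phi> + box_ms \<Gamma> = add_mset (Box b) G1" "T = add_mset (Imp (Box \<phi>) \<psi>) G1"
    by auto
  from box_in_decomp[OF BoxImpL.hyps(1) G1(1)] have bG: "b \<in># \<Gamma>" and T1: "G1 = \<Phi> + box_ms (\<Gamma> - {#b#})" by auto
  let ?S = "add_mset b G1"
  have 1: "G4iSLt (nb ?S + ub ?S + {#\<psi>, Box \<phi>#}) \<phi>"
  proof (cases "is_box b")
    case True
    then obtain b' where b: "b = Box b'" by (auto simp: is_box_def)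
    from bG obtain G0 where G0: "\<Gamma> = add_mset b G0" by (metis multi_member_split)
    have "\<Phi> + \<Gamma> + {#\<psi>, Box \<phi>#} = add_mset (Box b') (\<Phi> + (\<Gamma> - {#b#}) + {#\<psi>, Box \<phi>#})"
      using G0 b by simp
    from BoxImpL.IH(1)[OF this] show ?thesis using b T1 BoxImpL.hyps(1) by (simp add: add_mset_commute)
  next
    case False
    have "nb ?S + ub ?S + {#\<psi>, Box \<phi>#} = \<Phi> + \<Gamma> + {#\<psi>, Box \<phi>#}"
      using False T1 BoxImpL.hyps(1) bG by simp
    then show ?thesis using BoxImpL.hyps(2) by simp
  qed
  have 2: "G4iSLt (add_mset \<psi> ?S) \<chi>"
    using BoxImpL.IH(2)[of b "add_mset \<psi> G1"] G1 by (simp add: add_mset_commute)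
  show ?case using BoxImpL_gen[OF 1 2] G1 by (simp add: add_mset_commute)
next
  case (SLtR \<Phi> \<Gamma> \<phi>)
  from box_in_decomp[OF SLtR.hyps(1) SLtR.prems] have bG: "b \<in># \<Gamma>" and T1: "T = \<Phi> + box_ms (\<Gamma> - {#b#})" by auto
  let ?S = "add_mset b T"
  have 1: "G4iSLt (nb ?S + ub ?S + {#Box \<phi>#}) \<phi>"
  proof (cases "is_box b")
    case True
    then obtain b' where b: "b = Box b'" by (auto simp: is_box_def)
    from bG obtain G0 where G0: "\<Gamma> = add_mset b G0" by (metis multi_member_split)
    have "\<Phi> + \<Gamma> + {#Box \<phi>#} = add_mset (Box b') (\<Phi> + (\<Gamma> - {#b#}) + {#Box \<phi>#})"
      using G0 b by simp
    from SLtR.IH[OF this] show ?thesis using b T1 SLtR.hyps(1) by (simp add: add_mset_commute)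
  next
    case False
    have "nb ?S + ub ?S + {#Box \<phi>#} = \<Phi> + \<Gamma> + {#Box \<phi>#}"
      using False T1 SLtR.hyps(1) bG by simp
    then show ?thesis using SLtR.hyps(2) by simp
  qed
  show ?case using SLtR_gen[OF 1] by simp
next
  case (AndImpL \<phi> \<psi> \<chi> \<Gamma> \<delta>)
  from add_neq_split[OF AndImpL.prems] obtain G0 where G: "\<Gamma> = add_mset (Box b) G0" "T = add_mset (Imp (And \<phi> \<psi>) \<chi>) G0" by auto
  have "G4iSLt (add_mset b (add_mset (Imp \<phi> (Imp \<psi> \<chi>)) G0)) \<delta>"
    using AndImpL.IH[of b "add_mset (Imp \<phi> (Imp \<psi> \<chi>)) G0"] G by (simp add: add_mset_commute)
  then have "G4iSLt (add_mset (Imp (And \<phi> \<psi>) \<chi>) (add_mset b G0)) \<delta>" by (intro G4iSLt.AndImpL) (simp add: add_mset_commute)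
  then show ?case using G by (simp add: add_mset_commute)
next
  case (OrImpL \<phi> \<chi> \<psi> \<Gamma> \<delta>)
  from add_neq_split[OF OrImpL.prems] obtain G0 where G: "\<Gamma> = add_mset (Box b) G0" "T = add_mset (Imp (Or \<phi> \<psi>) \<chi>) G0" by auto
  have "G4iSLt (add_mset b (add_mset (Imp \<phi> \<chi>) (add_mset (Imp \<psi> \<chi>) G0))) \<delta>"
    using OrImpL.IH[of b "add_mset (Imp \<phi> \<chi>) (add_mset (Imp \<psi> \<chi>) G0)"] G by (simp add: add_mset_commute)
  then have "G4iSLt (add_mset (Imp (Or \<phi> \<psi>) \<chi>) (add_mset b G0)) \<delta>" by (intro G4iSLt.OrImpL) (simp add: add_mset_commute)
  then show ?case using G by (simp add: add_mset_commute)
next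
  case (ImpImpL \<psi> \<chi> \<Gamma> \<phi> \<delta>)
  from add_neq_split[OF ImpImpL.prems] obtain G0 where G: "\<Gamma> = add_mset (Box b) G0" "T = add_mset (Imp (Imp \<phi> \<psi>) \<chi>) G0" by auto
  have "G4iSLt (add_mset b (add_mset (Imp \<psi> \<chi>) G0)) (Imp \<phi> \<psi>)"
    using ImpImpL.IH(1)[of b "add_mset (Imp \<psi> \<chi>) G0"] G by (simp add: add_mset_commute)
  moreover have "G4iSLt (add_mset b (add_mset \<chi> G0)) \<delta>"
    using ImpImpL.IH(2)[of b "add_mset \<chi> G0"] G by (simp add: add_mset_commute)
  ultimately have "G4iSLt (add_mset (Imp (Imp \<phi> \<psi>) \<chi>) (add_mset b G0)) \<delta>" by (intro G4iSLt.ImpImpL) (simp_all add: add_mset_commute)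
  then show ?case using G by (simp add: add_mset_commute)
qed

lemma unboxL: "G4iSLt (add_mset (Box b) T) C \<Longrightarrow> G4iSLt (add_mset b T) C"
  using unboxL_aux by blast

lemma unboxL_ms: "G4iSLt (X + box_ms D) C \<Longrightarrow> G4iSLt (X + D) C"
proof (induction D arbitrary: X)
  case empty then show ?case by simp
next
  case (add x D)
  have "G4iSLt (add_mset (Box x) (X + box_ms D)) C" using add.prems by simp
  then have "G4iSLt (add_mset x X + box_ms D) C" using unboxL by simp
  then have "G4iSLt (add_mset x X + D) C" using add.IH by blast
  then show ?case by simp
qed

lemma unbox_all: "G4iSLt S C \<Longrightarrow> G4iSLt (nb S + ub S) C"
  using unboxL_ms[of "nb S" "ub S" C] decomp[of S] by simp


lemma boxfree_diff[simp]: "boxfree P \<Longrightarrow> boxfree (P - Q)"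
  by (auto simp: boxfree_def dest: in_diffD)

lemma nbub_split: "boxfree P \<Longrightarrow> nb (M + (P + box_ms G)) + ub (M + (P + box_ms G)) = nb M + ub M + (P + G)"
  by (simp add: ac_simps)

lemma unbox_part: "G4iSLt (M + X) C \<Longrightarrow> G4iSLt (nb M + ub M + X) C"
proof -
  assume "G4iSLt (M + X) C"
  then have "G4iSLt ((nb M + X) + box_ms (ub M)) C" using decomp[of M]
    by (metis add.assoc add.commute)
  then have "G4iSLt ((nb M + X) + ub M) C" by (rule unboxL_ms)
  then show ?thesis by (simp add: ac_simps)
qed

lemma AndL_inv_aux: "G4iSLt S C \<Longrightarrow> S = add_mset (And a b) T \<Longrightarrow> G4iSLt (add_mset a (add_mset b T)) C"
proof (induction arbitrary: T rule: G4iSLt.induct)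
  case (BotL \<Gamma> \<chi>)
  from add_neq_split[OF BotL.prems] obtain G0 where "T = add_mset Bot G0" by auto
  then show ?case by (metis G4iSLt.BotL add_mset_commute)
next
  case (IdP p \<Gamma>)
  from add_neq_split[OF IdP.prems] obtain G0 where "T = add_mset (Var p) G0" by auto
  then show ?case by (metis G4iSLt.IdP add_mset_commute)
next
  case (AndL \<phi> \<psi> \<Gamma> \<chi>)
  show ?case
  proof (cases "And \<phi> \<psi> = And a b")
    case True
    then show ?thesis using AndL.prems AndL.hyps by auto
  next
    case False
    from add_neq_split[OF AndL.prems False] obtain G0 where G: "\<Gamma> = add_mset (And a b) G0" "T = add_mset (And \<phi> \<psi>) G0" by auto
    have "G4iSLt (add_mset a (add_mset b (add_mset \<phi> (add_mset \<psi> G0)))) \<chi>"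
      using AndL.IH[of "add_mset \<phi> (add_mset \<psi> G0)"] G by (simp add: add_mset_commute)
    then have "G4iSLt (add_mset (And \<phi> \<psi>) (add_mset a (add_mset b G0))) \<chi>" by (intro G4iSLt.AndL) (simp add: add_mset_commute)
    then show ?thesis using G by (simp add: add_mset_commute)
  qed
next
  case (AndR \<Gamma> \<phi> \<psi>)
  then show ?case by (intro G4iSLt.AndR) auto
next
  case (OrL \<phi> \<Gamma> \<chi> \<psi>)
  from add_neq_split[OF OrL.prems] obtain G0 where G: "\<Gamma> = add_mset (And a b) G0" "T = add_mset (Or \<phi> \<psi>) G0" by auto
  have "G4iSLt (add_mset a (add_mset b (add_mset \<phi> G0))) \<chi>"
    using OrL.IH(1)[of "add_mset \<phi> G0"] G by (simp add: add_mset_commute)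
  moreover have "G4iSLt (add_mset a (add_mset b (add_mset \<psi> G0))) \<chi>"
    using OrL.IH(2)[of "add_mset \<psi> G0"] G by (simp add: add_mset_commute)
  ultimately have "G4iSLt (add_mset (Or \<phi> \<psi>) (add_mset a (add_mset b G0))) \<chi>" by (intro G4iSLt.OrL) (simp_all add: add_mset_commute)
  then show ?case using G by (simp add: add_mset_commute)
next
  case (OrR1 \<Gamma> \<phi> \<psi>)
  then show ?case by (intro G4iSLt.OrR1) auto
next
  case (OrR2 \<Gamma> \<psi> \<phi>)
  then show ?case by (intro G4iSLt.OrR2) auto
next
  case (VarImpL p \<phi> \<Gamma> \<chi>)
  from add_neq_split[OF VarImpL.prems] obtain G1 where G1: "add_mset (Imp (Var p) \<phi>) \<Gamma> = add_mset (And a b) G1" "T = add_mset (Var p) G1" by auto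
  from add_neq_split[OF G1(1)] obtain G0 where G: "\<Gamma> = add_mset (And a b) G0" "G1 = add_mset (Imp (Var p) \<phi>) G0" by auto
  have "G4iSLt (add_mset a (add_mset b (add_mset (Var p) (add_mset \<phi> G0)))) \<chi>"
    using VarImpL.IH[of "add_mset (Var p) (add_mset \<phi> G0)"] G by (simp add: add_mset_commute)
  then have "G4iSLt (add_mset (Var p) (add_mset (Imp (Var p) \<phi>) (add_mset a (add_mset b G0)))) \<chi>" by (intro G4iSLt.VarImpL) (simp add: add_mset_commute)
  then show ?case using G G1 by (simp add: add_mset_commute)
next
  case (ImpR \<phi> \<Gamma> \<psi>)
  have "G4iSLt (add_mset a (add_mset b (add_mset \<phi> T))) \<psi>" using ImpR.IH[of "add_mset \<phi> T"] ImpR.prems by (simp add: add_mset_commute)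
  then show ?case by (intro G4iSLt.ImpR) (simp add: add_mset_commute)
next
  case (BoxImpL \<Phi> \<Gamma> \<psi> \<phi> \<chi>)
  from BoxImpL.prems have "add_mset (Imp (Box \<phi>) \<psi>) (\<Phi> + box_ms \<Gamma>) = add_mset (And a b) T" by simp
  from add_neq_split[OF this] obtain G1 where G1: "\<Phi> + box_ms \<Gamma> = add_mset (And a b) G1" "T = add_mset (Imp (Box \<phi>) \<psi>) G1"
    by auto
  from nonbox_in_decomp[OF BoxImpL.hyps(1) G1(1)] have FP: "And a b \<in># \<Phi>" and T1: "G1 = (\<Phi> - {#And a b#}) + box_ms \<Gamma>" by auto
  let ?S = "add_mset a (add_mset b G1)"
  have e1: "\<Phi> + \<Gamma> + {#\<psi>, Box \<phi>#} = add_mset (And a b) ((\<Phi> - {#And a b#}) + \<Gamma> + {#\<psi>, Box \<phi>#})"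
    using FP by (metis insert_DiffM union_mset_add_mset_left)
  have "G4iSLt ({#a, b#} + ((\<Phi> - {#And a b#}) + \<Gamma> + {#\<psi>, Box \<phi>#})) \<phi>"
    using BoxImpL.IH(1)[OF e1] by (simp add: add_mset_commute)
  from unbox_part[OF this] have "G4iSLt (nb {#a, b#} + ub {#a, b#} + ((\<Phi> - {#And a b#}) + \<Gamma>) + {#\<psi>, Box \<phi>#}) \<phi>"
    by (simp only: ac_simps)
  then have 1: "G4iSLt (nb ?S + ub ?S + {#\<psi>, Box \<phi>#}) \<phi>"
    using nbub_split[of "\<Phi> - {#And a b#}" "{#a, b#}" \<Gamma>] T1 BoxImpL.hyps(1)
    by (simp del: nb_add ub_add add: add_mset_commute)
  have 2: "G4iSLt (add_mset \<psi> ?S) \<chi>"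
    using BoxImpL.IH(2)[of "add_mset \<psi> G1"] G1 by (simp add: add_mset_commute)
  show ?case using BoxImpL_gen[OF 1 2] G1 by (simp add: add_mset_commute)
next
  case (SLtR \<Phi> \<Gamma> \<phi>)
  from nonbox_in_decomp[OF SLtR.hyps(1) SLtR.prems] have FP: "And a b \<in># \<Phi>" and T1: "T = (\<Phi> - {#And a b#}) + box_ms \<Gamma>" by auto
  let ?S = "add_mset a (add_mset b T)"
  have e1: "\<Phi> + \<Gamma> + {#Box \<phi>#} = add_mset (And a b) ((\<Phi> - {#And a b#}) + \<Gamma> + {#Box \<phi>#})"
    using FP by (metis insert_DiffM union_mset_add_mset_left)
  have "G4iSLt ({#a, b#} + ((\<Phi> - {#And a b#}) + \<Gamma> + {#Box \<phi>#})) \<phi>"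
    using SLtR.IH[OF e1] by (simp add: add_mset_commute)
  from unbox_part[OF this] have "G4iSLt (nb {#a, b#} + ub {#a, b#} + ((\<Phi> - {#And a b#}) + \<Gamma>) + {#Box \<phi>#}) \<phi>"
    by (simp only: ac_simps)
  then have 1: "G4iSLt (nb ?S + ub ?S + {#Box \<phi>#}) \<phi>"
    using nbub_split[of "\<Phi> - {#And a b#}" "{#a, b#}" \<Gamma>] T1 SLtR.hyps(1)
    by (simp del: nb_add ub_add add: add_mset_commute)
  show ?case using SLtR_gen[OF 1] by simp
next
  case (AndImpL \<phi> \<psi> \<chi> \<Gamma> \<delta>)
  from add_neq_split[OF AndImpL.prems] obtain G0 where G: "\<Gamma> = add_mset (And a b) G0" "T = add_mset (Imp (And \<phi> \<psi>) \<chi>) G0" by auto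
  have "G4iSLt (add_mset a (add_mset b (add_mset (Imp \<phi> (Imp \<psi> \<chi>)) G0))) \<delta>"
    using AndImpL.IH[of "add_mset (Imp \<phi> (Imp \<psi> \<chi>)) G0"] G by (simp add: add_mset_commute)
  then have "G4iSLt (add_mset (Imp (And \<phi> \<psi>) \<chi>) (add_mset a (add_mset b G0))) \<delta>" by (intro G4iSLt.AndImpL) (simp add: add_mset_commute)
  then show ?case using G by (simp add: add_mset_commute)
next
  case (OrImpL \<phi> \<chi> \<psi> \<Gamma> \<delta>)
  from add_neq_split[OF OrImpL.prems] obtain G0 where G: "\<Gamma> = add_mset (And a b) G0" "T = add_mset (Imp (Or \<phi> \<psi>) \<chi>) G0" by auto
  have "G4iSLt (add_mset a (add_mset b (add_mset (Imp \<phi> \<chi>) (add_mset (Imp \<psi> \<chi>) G0)))) \<delta>"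
    using OrImpL.IH[of "add_mset (Imp \<phi> \<chi>) (add_mset (Imp \<psi> \<chi>) G0)"] G by (simp add: add_mset_commute)
  then have "G4iSLt (add_mset (Imp (Or \<phi> \<psi>) \<chi>) (add_mset a (add_mset b G0))) \<delta>" by (intro G4iSLt.OrImpL) (simp add: add_mset_commute)
  then show ?case using G by (simp add: add_mset_commute)
next
  case (ImpImpL \<psi> \<chi> \<Gamma> \<phi> \<delta>)
  from add_neq_split[OF ImpImpL.prems] obtain G0 where G: "\<Gamma> = add_mset (And a b) G0" "T = add_mset (Imp (Imp \<phi> \<psi>) \<chi>) G0" by auto
  have "G4iSLt (add_mset a (add_mset b (add_mset (Imp \<psi> \<chi>) G0))) (Imp \<phi> \<psi>)"
    using ImpImpL.IH(1)[of "add_mset (Imp \<psi> \<chi>) G0"] G by (simp add: add_mset_commute)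
  moreover have "G4iSLt (add_mset a (add_mset b (add_mset \<chi> G0))) \<delta>"
    using ImpImpL.IH(2)[of "add_mset \<chi> G0"] G by (simp add: add_mset_commute)
  ultimately have "G4iSLt (add_mset (Imp (Imp \<phi> \<psi>) \<chi>) (add_mset a (add_mset b G0))) \<delta>" by (intro G4iSLt.ImpImpL) (simp_all add: add_mset_commute)
  then show ?case using G by (simp add: add_mset_commute)
qed

lemma AndL_inv: "G4iSLt (add_mset (And a b) T) C \<Longrightarrow> G4iSLt (add_mset a (add_mset b T)) C"
  using AndL_inv_aux by blast


lemma OrL_inv1_aux: "G4iSLt S C \<Longrightarrow> S = add_mset (Or a b) T \<Longrightarrow> G4iSLt ({#a#} + T) C"
proof (induction arbitrary: T rule: G4iSLt.induct)
  case (BotL \<Gamma> \<chi>)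
  from add_neq_split[OF BotL.prems] obtain G0 where "T = add_mset Bot G0" by auto
  then show ?case by (metis G4iSLt.BotL add_mset_commute union_mset_add_mset_right)
next
  case (IdP p \<Gamma>)
  from add_neq_split[OF IdP.prems] obtain G0 where "T = add_mset (Var p) G0" by auto
  then show ?case by (metis G4iSLt.IdP add_mset_commute union_mset_add_mset_right)
next
  case (AndL \<phi> \<psi> \<Gamma> \<chi>)
  from add_neq_split[OF AndL.prems] obtain G0 where G: "\<Gamma> = add_mset (Or a b) G0" "T = add_mset (And \<phi> \<psi>) G0" by auto
  have "G4iSLt ({#a#} + add_mset \<phi> (add_mset \<psi> G0)) \<chi>"
    using AndL.IH[of "add_mset \<phi> (add_mset \<psi> G0)"] G by (simp add: add_mset_commute)
  then have "G4iSLt (add_mset (And \<phi> \<psi>) ({#a#} + G0)) \<chi>" by (intro G4iSLt.AndL) (simp add: add_mset_commute)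
  then show ?case using G by (simp add: add_mset_commute)
next
  case (AndR \<Gamma> \<phi> \<psi>)
  then show ?case by (intro G4iSLt.AndR) auto
next
  case (OrL \<phi> \<Gamma> \<chi> \<psi>)
  show ?case
  proof (cases "Or \<phi> \<psi> = Or a b")
    case True
    then show ?thesis using OrL.prems OrL.hyps(1) by auto
  next
    case False
    from add_neq_split[OF OrL.prems False] obtain G0 where G: "\<Gamma> = add_mset (Or a b) G0" "T = add_mset (Or \<phi> \<psi>) G0" by auto
    have "G4iSLt ({#a#} + add_mset \<phi> G0) \<chi>"
      using OrL.IH(1)[of "add_mset \<phi> G0"] G by (simp add: add_mset_commute)
    moreover have "G4iSLt ({#a#} + add_mset \<psi> G0) \<chi>"
      using OrL.IH(2)[of "add_mset \<psi> G0"] G by (simp add: add_mset_commute)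
    ultimately have "G4iSLt (add_mset (Or \<phi> \<psi>) ({#a#} + G0)) \<chi>" by (intro G4iSLt.OrL) (simp_all add: add_mset_commute)
    then show ?thesis using G by (simp add: add_mset_commute)
  qed
next
  case (OrR1 \<Gamma> \<phi> \<psi>)
  then show ?case by (intro G4iSLt.OrR1) auto
next
  case (OrR2 \<Gamma> \<psi> \<phi>)
  then show ?case by (intro G4iSLt.OrR2) auto
next
  case (VarImpL p \<phi> \<Gamma> \<chi>)
  from add_neq_split[OF VarImpL.prems] obtain G1 where G1: "add_mset (Imp (Var p) \<phi>) \<Gamma> = add_mset (Or a b) G1" "T = add_mset (Var p) G1" by auto
  from add_neq_split[OF G1(1)] obtain G0 where G: "\<Gamma> = add_mset (Or a b) G0" "G1 = add_mset (Imp (Var p) \<phi>) G0" by auto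
  have "G4iSLt ({#a#} + add_mset (Var p) (add_mset \<phi> G0)) \<chi>"
    using VarImpL.IH[of "add_mset (Var p) (add_mset \<phi> G0)"] G by (simp add: add_mset_commute)
  then have "G4iSLt (add_mset (Var p) (add_mset (Imp (Var p) \<phi>) ({#a#} + G0))) \<chi>" by (intro G4iSLt.VarImpL) (simp add: add_mset_commute)
  then show ?case using G G1 by (simp add: add_mset_commute)
next
  case (ImpR \<phi> \<Gamma> \<psi>)
  have "G4iSLt ({#a#} + add_mset \<phi> T) \<psi>" using ImpR.IH[of "add_mset \<phi> T"] ImpR.prems by (simp add: add_mset_commute)
  then show ?case by (intro G4iSLt.ImpR) (simp add: add_mset_commute)
next
  case (BoxImpL \<Phi> \<Gamma> \<psi> \<phi> \<chi>)
  from BoxImpL.prems have "add_mset (Imp (Box \<phi>) \<psi>) (\<Phi> + box_ms \<Gamma>) = add_mset (Or a b) T" by simp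
  from add_neq_split[OF this] obtain G1 where G1: "\<Phi> + box_ms \<Gamma> = add_mset (Or a b) G1" "T = add_mset (Imp (Box \<phi>) \<psi>) G1"
    by auto
  from nonbox_in_decomp[OF BoxImpL.hyps(1) G1(1)] have FP: "Or a b \<in># \<Phi>" and T1: "G1 = (\<Phi> - {#Or a b#}) + box_ms \<Gamma>" by auto
  let ?S = "{#a#} + G1"
  have e1: "\<Phi> + \<Gamma> + {#\<psi>, Box \<phi>#} = add_mset (Or a b) ((\<Phi> - {#Or a b#}) + \<Gamma> + {#\<psi>, Box \<phi>#})"
    using FP by (metis insert_DiffM union_mset_add_mset_left)
  have "G4iSLt ({#a#} + ((\<Phi> - {#Or a b#}) + \<Gamma> + {#\<psi>, Box \<phi>#})) \<phi>"
    using BoxImpL.IH(1)[OF e1] by (simp add: add_mset_commute)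
  from unbox_part[OF this] have "G4iSLt (nb ({#a#}) + ub ({#a#}) + ((\<Phi> - {#Or a b#}) + \<Gamma>) + {#\<psi>, Box \<phi>#}) \<phi>"
    by (simp only: ac_simps)
  then have 1: "G4iSLt (nb ?S + ub ?S + {#\<psi>, Box \<phi>#}) \<phi>"
    using nbub_split[of "\<Phi> - {#Or a b#}" "{#a#}" \<Gamma>] T1 BoxImpL.hyps(1)
    by (simp del: nb_add ub_add add: add_mset_commute)
  have 2: "G4iSLt (add_mset \<psi> ?S) \<chi>"
    using BoxImpL.IH(2)[of "add_mset \<psi> G1"] G1 by (simp add: add_mset_commute)
  show ?case using BoxImpL_gen[OF 1 2] G1 by (simp add: add_mset_commute)
next
  case (SLtR \<Phi> \<Gamma> \<phi>)
  from nonbox_in_decomp[OF SLtR.hyps(1) SLtR.prems] have FP: "Or a b \<in># \<Phi>" and T1: "T = (\<Phi> - {#Or a b#}) + box_ms \<Gamma>" by auto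
  let ?S = "{#a#} + T"
  have e1: "\<Phi> + \<Gamma> + {#Box \<phi>#} = add_mset (Or a b) ((\<Phi> - {#Or a b#}) + \<Gamma> + {#Box \<phi>#})"
    using FP by (metis insert_DiffM union_mset_add_mset_left)
  have "G4iSLt ({#a#} + ((\<Phi> - {#Or a b#}) + \<Gamma> + {#Box \<phi>#})) \<phi>"
    using SLtR.IH[OF e1] by (simp add: add_mset_commute)
  from unbox_part[OF this] have "G4iSLt (nb ({#a#}) + ub ({#a#}) + ((\<Phi> - {#Or a b#}) + \<Gamma>) + {#Box \<phi>#}) \<phi>"
    by (simp only: ac_simps)
  then have 1: "G4iSLt (nb ?S + ub ?S + {#Box \<phi>#}) \<phi>"
    using nbub_split[of "\<Phi> - {#Or a b#}" "{#a#}" \<Gamma>] T1 SLtR.hyps(1)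
    by (simp del: nb_add ub_add add: add_mset_commute)
  show ?case using SLtR_gen[OF 1] by simp
next
  case (AndImpL \<phi> \<psi> \<chi> \<Gamma> \<delta>)
  from add_neq_split[OF AndImpL.prems] obtain G0 where G: "\<Gamma> = add_mset (Or a b) G0" "T = add_mset (Imp (And \<phi> \<psi>) \<chi>) G0" by auto
  have "G4iSLt ({#a#} + add_mset (Imp \<phi> (Imp \<psi> \<chi>)) G0) \<delta>"
    using AndImpL.IH[of "add_mset (Imp \<phi> (Imp \<psi> \<chi>)) G0"] G by (simp add: add_mset_commute)
  then have "G4iSLt (add_mset (Imp (And \<phi> \<psi>) \<chi>) ({#a#} + G0)) \<delta>" by (intro G4iSLt.AndImpL) (simp add: add_mset_commute)
  then show ?case using G by (simp add: add_mset_commute)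
next
  case (OrImpL \<phi> \<chi> \<psi> \<Gamma> \<delta>)
  from add_neq_split[OF OrImpL.prems] obtain G0 where G: "\<Gamma> = add_mset (Or a b) G0" "T = add_mset (Imp (Or \<phi> \<psi>) \<chi>) G0" by auto
  have "G4iSLt ({#a#} + add_mset (Imp \<phi> \<chi>) (add_mset (Imp \<psi> \<chi>) G0)) \<delta>"
    using OrImpL.IH[of "add_mset (Imp \<phi> \<chi>) (add_mset (Imp \<psi> \<chi>) G0)"] G by (simp add: add_mset_commute)
  then have "G4iSLt (add_mset (Imp (Or \<phi> \<psi>) \<chi>) ({#a#} + G0)) \<delta>" by (intro G4iSLt.OrImpL) (simp add: add_mset_commute)
  then show ?case using G by (simp add: add_mset_commute)
next
  case (ImpImpL \<psi> \<chi> \<Gamma> \<phi> \<delta>)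
  from add_neq_split[OF ImpImpL.prems] obtain G0 where G: "\<Gamma> = add_mset (Or a b) G0" "T = add_mset (Imp (Imp \<phi> \<psi>) \<chi>) G0" by auto
  have "G4iSLt ({#a#} + add_mset (Imp \<psi> \<chi>) G0) (Imp \<phi> \<psi>)"
    using ImpImpL.IH(1)[of "add_mset (Imp \<psi> \<chi>) G0"] G by (simp add: add_mset_commute)
  moreover have "G4iSLt ({#a#} + add_mset \<chi> G0) \<delta>"
    using ImpImpL.IH(2)[of "add_mset \<chi> G0"] G by (simp add: add_mset_commute)
  ultimately have "G4iSLt (add_mset (Imp (Imp \<phi> \<psi>) \<chi>) ({#a#} + G0)) \<delta>" by (intro G4iSLt.ImpImpL) (simp_all add: add_mset_commute)
  then show ?case using G by (simp add: add_mset_commute)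
qed

lemma OrL_inv2_aux: "G4iSLt S C \<Longrightarrow> S = add_mset (Or a b) T \<Longrightarrow> G4iSLt ({#b#} + T) C"
proof (induction arbitrary: T rule: G4iSLt.induct)
  case (BotL \<Gamma> \<chi>)
  from add_neq_split[OF BotL.prems] obtain G0 where "T = add_mset Bot G0" by auto
  then show ?case by (metis G4iSLt.BotL add_mset_commute union_mset_add_mset_right)
next
  case (IdP p \<Gamma>)
  from add_neq_split[OF IdP.prems] obtain G0 where "T = add_mset (Var p) G0" by auto
  then show ?case by (metis G4iSLt.IdP add_mset_commute union_mset_add_mset_right)
next
  case (AndL \<phi> \<psi> \<Gamma> \<chi>)
  from add_neq_split[OF AndL.prems] obtain G0 where G: "\<Gamma> = add_mset (Or a b) G0" "T = add_mset (And \<phi> \<psi>) G0" by auto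
  have "G4iSLt ({#b#} + add_mset \<phi> (add_mset \<psi> G0)) \<chi>"
    using AndL.IH[of "add_mset \<phi> (add_mset \<psi> G0)"] G by (simp add: add_mset_commute)
  then have "G4iSLt (add_mset (And \<phi> \<psi>) ({#b#} + G0)) \<chi>" by (intro G4iSLt.AndL) (simp add: add_mset_commute)
  then show ?case using G by (simp add: add_mset_commute)
next
  case (AndR \<Gamma> \<phi> \<psi>)
  then show ?case by (intro G4iSLt.AndR) auto
next
  case (OrL \<phi> \<Gamma> \<chi> \<psi>)
  show ?case
  proof (cases "Or \<phi> \<psi> = Or a b")
    case True
    then show ?thesis using OrL.prems OrL.hyps(2) by auto
  next
    case False
    from add_neq_split[OF OrL.prems False] obtain G0 where G: "\<Gamma> = add_mset (Or a b) G0" "T = add_mset (Or \<phi> \<psi>) G0" by auto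
    have "G4iSLt ({#b#} + add_mset \<phi> G0) \<chi>"
      using OrL.IH(1)[of "add_mset \<phi> G0"] G by (simp add: add_mset_commute)
    moreover have "G4iSLt ({#b#} + add_mset \<psi> G0) \<chi>"
      using OrL.IH(2)[of "add_mset \<psi> G0"] G by (simp add: add_mset_commute)
    ultimately have "G4iSLt (add_mset (Or \<phi> \<psi>) ({#b#} + G0)) \<chi>" by (intro G4iSLt.OrL) (simp_all add: add_mset_commute)
    then show ?thesis using G by (simp add: add_mset_commute)
  qed
next
  case (OrR1 \<Gamma> \<phi> \<psi>)
  then show ?case by (intro G4iSLt.OrR1) auto
next
  case (OrR2 \<Gamma> \<psi> \<phi>)
  then show ?case by (intro G4iSLt.OrR2) auto
next
  case (VarImpL p \<phi> \<Gamma> \<chi>)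
  from add_neq_split[OF VarImpL.prems] obtain G1 where G1: "add_mset (Imp (Var p) \<phi>) \<Gamma> = add_mset (Or a b) G1" "T = add_mset (Var p) G1" by auto
  from add_neq_split[OF G1(1)] obtain G0 where G: "\<Gamma> = add_mset (Or a b) G0" "G1 = add_mset (Imp (Var p) \<phi>) G0" by auto
  have "G4iSLt ({#b#} + add_mset (Var p) (add_mset \<phi> G0)) \<chi>"
    using VarImpL.IH[of "add_mset (Var p) (add_mset \<phi> G0)"] G by (simp add: add_mset_commute)
  then have "G4iSLt (add_mset (Var p) (add_mset (Imp (Var p) \<phi>) ({#b#} + G0))) \<chi>" by (intro G4iSLt.VarImpL) (simp add: add_mset_commute)
  then show ?case using G G1 by (simp add: add_mset_commute)
next
  case (ImpR \<phi> \<Gamma> \<psi>)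
  have "G4iSLt ({#b#} + add_mset \<phi> T) \<psi>" using ImpR.IH[of "add_mset \<phi> T"] ImpR.prems by (simp add: add_mset_commute)
  then show ?case by (intro G4iSLt.ImpR) (simp add: add_mset_commute)
next
  case (BoxImpL \<Phi> \<Gamma> \<psi> \<phi> \<chi>)
  from BoxImpL.prems have "add_mset (Imp (Box \<phi>) \<psi>) (\<Phi> + box_ms \<Gamma>) = add_mset (Or a b) T" by simp
  from add_neq_split[OF this] obtain G1 where G1: "\<Phi> + box_ms \<Gamma> = add_mset (Or a b) G1" "T = add_mset (Imp (Box \<phi>) \<psi>) G1"
    by auto
  from nonbox_in_decomp[OF BoxImpL.hyps(1) G1(1)] have FP: "Or a b \<in># \<Phi>" and T1: "G1 = (\<Phi> - {#Or a b#}) + box_ms \<Gamma>" by auto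
  let ?S = "{#b#} + G1"
  have e1: "\<Phi> + \<Gamma> + {#\<psi>, Box \<phi>#} = add_mset (Or a b) ((\<Phi> - {#Or a b#}) + \<Gamma> + {#\<psi>, Box \<phi>#})"
    using FP by (metis insert_DiffM union_mset_add_mset_left)
  have "G4iSLt ({#b#} + ((\<Phi> - {#Or a b#}) + \<Gamma> + {#\<psi>, Box \<phi>#})) \<phi>"
    using BoxImpL.IH(1)[OF e1] by (simp add: add_mset_commute)
  from unbox_part[OF this] have "G4iSLt (nb ({#b#}) + ub ({#b#}) + ((\<Phi> - {#Or a b#}) + \<Gamma>) + {#\<psi>, Box \<phi>#}) \<phi>"
    by (simp only: ac_simps)
  then have 1: "G4iSLt (nb ?S + ub ?S + {#\<psi>, Box \<phi>#}) \<phi>"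
    using nbub_split[of "\<Phi> - {#Or a b#}" "{#b#}" \<Gamma>] T1 BoxImpL.hyps(1)
    by (simp del: nb_add ub_add add: add_mset_commute)
  have 2: "G4iSLt (add_mset \<psi> ?S) \<chi>"
    using BoxImpL.IH(2)[of "add_mset \<psi> G1"] G1 by (simp add: add_mset_commute)
  show ?case using BoxImpL_gen[OF 1 2] G1 by (simp add: add_mset_commute)
next
  case (SLtR \<Phi> \<Gamma> \<phi>)
  from nonbox_in_decomp[OF SLtR.hyps(1) SLtR.prems] have FP: "Or a b \<in># \<Phi>" and T1: "T = (\<Phi> - {#Or a b#}) + box_ms \<Gamma>" by auto
  let ?S = "{#b#} + T"
  have e1: "\<Phi> + \<Gamma> + {#Box \<phi>#} = add_mset (Or a b) ((\<Phi> - {#Or a b#}) + \<Gamma> + {#Box \<phi>#})"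
    using FP by (metis insert_DiffM union_mset_add_mset_left)
  have "G4iSLt ({#b#} + ((\<Phi> - {#Or a b#}) + \<Gamma> + {#Box \<phi>#})) \<phi>"
    using SLtR.IH[OF e1] by (simp add: add_mset_commute)
  from unbox_part[OF this] have "G4iSLt (nb ({#b#}) + ub ({#b#}) + ((\<Phi> - {#Or a b#}) + \<Gamma>) + {#Box \<phi>#}) \<phi>"
    by (simp only: ac_simps)
  then have 1: "G4iSLt (nb ?S + ub ?S + {#Box \<phi>#}) \<phi>"
    using nbub_split[of "\<Phi> - {#Or a b#}" "{#b#}" \<Gamma>] T1 SLtR.hyps(1)
    by (simp del: nb_add ub_add add: add_mset_commute)
  show ?case using SLtR_gen[OF 1] by simp
next
  case (AndImpL \<phi> \<psi> \<chi> \<Gamma> \<delta>)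
  from add_neq_split[OF AndImpL.prems] obtain G0 where G: "\<Gamma> = add_mset (Or a b) G0" "T = add_mset (Imp (And \<phi> \<psi>) \<chi>) G0" by auto
  have "G4iSLt ({#b#} + add_mset (Imp \<phi> (Imp \<psi> \<chi>)) G0) \<delta>"
    using AndImpL.IH[of "add_mset (Imp \<phi> (Imp \<psi> \<chi>)) G0"] G by (simp add: add_mset_commute)
  then have "G4iSLt (add_mset (Imp (And \<phi> \<psi>) \<chi>) ({#b#} + G0)) \<delta>" by (intro G4iSLt.AndImpL) (simp add: add_mset_commute)
  then show ?case using G by (simp add: add_mset_commute)
next
  case (OrImpL \<phi> \<chi> \<psi> \<Gamma> \<delta>)
  from add_neq_split[OF OrImpL.prems] obtain G0 where G: "\<Gamma> = add_mset (Or a b) G0" "T = add_mset (Imp (Or \<phi> \<psi>) \<chi>) G0" by auto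
  have "G4iSLt ({#b#} + add_mset (Imp \<phi> \<chi>) (add_mset (Imp \<psi> \<chi>) G0)) \<delta>"
    using OrImpL.IH[of "add_mset (Imp \<phi> \<chi>) (add_mset (Imp \<psi> \<chi>) G0)"] G by (simp add: add_mset_commute)
  then have "G4iSLt (add_mset (Imp (Or \<phi> \<psi>) \<chi>) ({#b#} + G0)) \<delta>" by (intro G4iSLt.OrImpL) (simp add: add_mset_commute)
  then show ?case using G by (simp add: add_mset_commute)
next
  case (ImpImpL \<psi> \<chi> \<Gamma> \<phi> \<delta>)
  from add_neq_split[OF ImpImpL.prems] obtain G0 where G: "\<Gamma> = add_mset (Or a b) G0" "T = add_mset (Imp (Imp \<phi> \<psi>) \<chi>) G0" by auto
  have "G4iSLt ({#b#} + add_mset (Imp \<psi> \<chi>) G0) (Imp \<phi> \<psi>)"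
    using ImpImpL.IH(1)[of "add_mset (Imp \<psi> \<chi>) G0"] G by (simp add: add_mset_commute)
  moreover have "G4iSLt ({#b#} + add_mset \<chi> G0) \<delta>"
    using ImpImpL.IH(2)[of "add_mset \<chi> G0"] G by (simp add: add_mset_commute)
  ultimately have "G4iSLt (add_mset (Imp (Imp \<phi> \<psi>) \<chi>) ({#b#} + G0)) \<delta>" by (intro G4iSLt.ImpImpL) (simp_all add: add_mset_commute)
  then show ?case using G by (simp add: add_mset_commute)
qed

lemma OrL_inv1: "G4iSLt (add_mset (Or a b) T) C \<Longrightarrow> G4iSLt (add_mset a T) C"
  using OrL_inv1_aux by fastforce
lemma OrL_inv2: "G4iSLt (add_mset (Or a b) T) C \<Longrightarrow> G4iSLt (add_mset b T) C"
  using OrL_inv2_aux by fastforce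


lemma ImpR_inv_aux: "G4iSLt S C \<Longrightarrow> C = Imp a b \<Longrightarrow> G4iSLt (add_mset a S) b"
proof (induction rule: G4iSLt.induct)
  case (BotL \<Gamma> \<chi>)
  then show ?case by (metis G4iSLt.BotL add_mset_commute)
next
  case (AndL \<phi> \<psi> \<Gamma> \<chi>)
  then have "G4iSLt (add_mset (And \<phi> \<psi>) (add_mset a \<Gamma>)) b" by (intro G4iSLt.AndL) (simp add: add_mset_commute)
  then show ?case by (simp add: add_mset_commute)
next
  case (OrL \<phi> \<Gamma> \<chi> \<psi>)
  then have "G4iSLt (add_mset (Or \<phi> \<psi>) (add_mset a \<Gamma>)) b" by (intro G4iSLt.OrL) (simp_all add: add_mset_commute)
  then show ?case by (simp add: add_mset_commute)
next
  case (VarImpL p \<phi> \<Gamma> \<chi>)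
  then have "G4iSLt (add_mset (Var p) (add_mset (Imp (Var p) \<phi>) (add_mset a \<Gamma>))) b" by (intro G4iSLt.VarImpL) (simp add: add_mset_commute)
  then show ?case by (simp add: add_mset_commute)
next
  case (ImpR \<phi> \<Gamma> \<psi>)
  then show ?case by simp
next
  case (BoxImpL \<Phi> \<Gamma> \<psi> \<phi> \<chi>)
  let ?S = "add_mset a (\<Phi> + box_ms \<Gamma>)"
  have 1: "G4iSLt (nb ?S + ub ?S + {#\<psi>, Box \<phi>#}) \<phi>"
    using weak[OF BoxImpL.hyps(2), of "if is_box a then unbox a else a"] BoxImpL.hyps(1)
    by (auto simp: add.assoc add_mset_commute)
  have 2: "G4iSLt (add_mset \<psi> ?S) b"
    using BoxImpL.IH(2) BoxImpL.prems by (simp add: add_mset_commute)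
  show ?case using BoxImpL_gen[OF 1 2] by (simp add: add_mset_commute)
next
  case (AndImpL \<phi> \<psi> \<chi> \<Gamma> \<delta>)
  then have "G4iSLt (add_mset (Imp (And \<phi> \<psi>) \<chi>) (add_mset a \<Gamma>)) b" by (intro G4iSLt.AndImpL) (simp add: add_mset_commute)
  then show ?case by (simp add: add_mset_commute)
next
  case (OrImpL \<phi> \<chi> \<psi> \<Gamma> \<delta>)
  then have "G4iSLt (add_mset (Imp (Or \<phi> \<psi>) \<chi>) (add_mset a \<Gamma>)) b" by (intro G4iSLt.OrImpL) (simp add: add_mset_commute)
  then show ?case by (simp add: add_mset_commute)
next
  case (ImpImpL \<psi> \<chi> \<Gamma> \<phi> \<delta>)
  have "G4iSLt (add_mset a (add_mset (Imp \<psi> \<chi>) \<Gamma>)) (Imp \<phi> \<psi>)" using weak[OF ImpImpL.hyps(1)] .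
  then have "G4iSLt (add_mset (Imp (Imp \<phi> \<psi>) \<chi>) (add_mset a \<Gamma>)) b" using ImpImpL
    by (intro G4iSLt.ImpImpL) (simp_all add: add_mset_commute)
  then show ?case by (simp add: add_mset_commute)
qed auto

lemma ImpR_inv: "G4iSLt S (Imp a b) \<Longrightarrow> G4iSLt (add_mset a S) b"
  using ImpR_inv_aux by blast

lemma id_mp: "(\<forall>T. G4iSLt (add_mset A T) A) \<and>
  (\<forall>T B C. G4iSLt (add_mset A (add_mset B T)) C \<longrightarrow> G4iSLt (add_mset A (add_mset (Imp A B) T)) C)"
proof (induction A)
  case (Var p)
  show ?case by (auto intro: G4iSLt.IdP G4iSLt.VarImpL)
next
  case Bot
  show ?case by (auto intro: G4iSLt.BotL)
next
  case (And a1 a2)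
  have id: "G4iSLt (add_mset (And a1 a2) T) (And a1 a2)" for T
  proof -
    have "G4iSLt (add_mset a1 (add_mset a2 T)) a1" using And.IH(1) by blast
    moreover have "G4iSLt (add_mset a1 (add_mset a2 T)) a2" using And.IH(2) by (metis add_mset_commute)
    ultimately show ?thesis by (intro G4iSLt.AndL G4iSLt.AndR)
  qed
  have mp: "G4iSLt (add_mset (And a1 a2) (add_mset (Imp (And a1 a2) B) T)) C"
    if h: "G4iSLt (add_mset (And a1 a2) (add_mset B T)) C" for T B C
  proof -
    have "G4iSLt (add_mset a2 (add_mset B (add_mset a1 T))) C" using AndL_inv[OF h] by (simp add: add_mset_commute)
    with And.IH(2) have "G4iSLt (add_mset a2 (add_mset (Imp a2 B) (add_mset a1 T))) C"
      by blast
    then have "G4iSLt (add_mset a1 (add_mset (Imp a2 B) (add_mset a2 T))) C"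
      by (simp add: add_mset_commute)
    then have "G4iSLt (add_mset a1 (add_mset (Imp a1 (Imp a2 B)) (add_mset a2 T))) C"
      using And.IH(1) by blast
    then have "G4iSLt (add_mset (Imp a1 (Imp a2 B)) (add_mset a1 (add_mset a2 T))) C"
      by (simp add: add_mset_commute)
    then have "G4iSLt (add_mset (Imp (And a1 a2) B) (add_mset a1 (add_mset a2 T))) C"
      by (rule G4iSLt.AndImpL)
    then have "G4iSLt (add_mset a1 (add_mset a2 (add_mset (Imp (And a1 a2) B) T))) C"
      by (simp add: add_mset_commute)
    then show ?thesis by (rule G4iSLt.AndL)
  qed
  show ?case using id mp by blast
next
  case (Or a1 a2)
  have id: "G4iSLt (add_mset (Or a1 a2) T) (Or a1 a2)" for T
    using Or.IH by (intro G4iSLt.OrL G4iSLt.OrR1 G4iSLt.OrR2) auto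
  have mp: "G4iSLt (add_mset (Or a1 a2) (add_mset (Imp (Or a1 a2) B) T)) C"
    if h: "G4iSLt (add_mset (Or a1 a2) (add_mset B T)) C" for T B C
  proof -
    have h1: "G4iSLt (add_mset a1 (add_mset B T)) C" using OrL_inv1[OF h] .
    have h2: "G4iSLt (add_mset a2 (add_mset B T)) C" using OrL_inv2[OF h] .
    have "G4iSLt (add_mset a1 (add_mset B (add_mset (Imp a2 B) T))) C"
      using weak[OF h1, of "Imp a2 B"] by (simp add: add_mset_commute)
    then have "G4iSLt (add_mset a1 (add_mset (Imp a1 B) (add_mset (Imp a2 B) T))) C"
      using Or.IH(1) by blast
    then have "G4iSLt (add_mset (Imp a1 B) (add_mset (Imp a2 B) (add_mset a1 T))) C"
      by (simp add: add_mset_commute)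
    then have "G4iSLt (add_mset (Imp (Or a1 a2) B) (add_mset a1 T)) C"
      by (rule G4iSLt.OrImpL)
    then have g1: "G4iSLt (add_mset a1 (add_mset (Imp (Or a1 a2) B) T)) C"
      by (simp add: add_mset_commute)
    have "G4iSLt (add_mset a2 (add_mset B (add_mset (Imp a1 B) T))) C"
      using weak[OF h2, of "Imp a1 B"] by (simp add: add_mset_commute)
    then have "G4iSLt (add_mset a2 (add_mset (Imp a2 B) (add_mset (Imp a1 B) T))) C"
      using Or.IH(2) by blast
    then have "G4iSLt (add_mset (Imp a1 B) (add_mset (Imp a2 B) (add_mset a2 T))) C"
      by (simp add: add_mset_commute)
    then have "G4iSLt (add_mset (Imp (Or a1 a2) B) (add_mset a2 T)) C"
      by (rule G4iSLt.OrImpL)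
    then have g2: "G4iSLt (add_mset a2 (add_mset (Imp (Or a1 a2) B) T)) C"
      by (simp add: add_mset_commute)
    from g1 g2 show ?thesis by (rule G4iSLt.OrL)
  qed
  show ?case using id mp by blast
next
  case (Imp a1 a2)
  have id: "G4iSLt (add_mset (Imp a1 a2) T) (Imp a1 a2)" for T
  proof -
    have "G4iSLt (add_mset a2 (add_mset a1 T)) a2" using Imp.IH(2) by blast
    then have "G4iSLt (add_mset a1 (add_mset a2 T)) a2" by (simp add: add_mset_commute)
    then have "G4iSLt (add_mset a1 (add_mset (Imp a1 a2) T)) a2" using Imp.IH(1) by blast
    then show ?thesis by (intro G4iSLt.ImpR) (simp add: add_mset_commute)
  qed
  have mp: "G4iSLt (add_mset (Imp a1 a2) (add_mset (Imp (Imp a1 a2) B) T)) C"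
    if h: "G4iSLt (add_mset (Imp a1 a2) (add_mset B T)) C" for T B C
  proof -
    have "G4iSLt (add_mset (Imp a1 a2) (add_mset (Imp a2 B) T)) (Imp a1 a2)" using id by blast
    then have "G4iSLt (add_mset (Imp (Imp a1 a2) B) (add_mset (Imp a1 a2) T)) C"
      using h by (intro G4iSLt.ImpImpL) (simp_all add: add_mset_commute)
    then show ?thesis by (simp add: add_mset_commute)
  qed
  show ?case using id mp by blast
next
  case (Box a1)
  have id: "G4iSLt (add_mset (Box a1) T) (Box a1)" for T
  proof (rule SLtR_gen)
    have "G4iSLt (add_mset a1 (nb T + ub T + {#Box a1#})) a1" using Box.IH by blast
    then show "G4iSLt (nb (add_mset (Box a1) T) + ub (add_mset (Box a1) T) + {#Box a1#}) a1"
      by (simp add: ac_simps)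
  qed
  have mp: "G4iSLt (add_mset (Box a1) (add_mset (Imp (Box a1) B) T)) C"
    if h: "G4iSLt (add_mset (Box a1) (add_mset B T)) C" for T B C
  proof -
    have "G4iSLt (add_mset (Imp (Box a1) B) (add_mset (Box a1) T)) C"
    proof (rule BoxImpL_gen)
      have "G4iSLt (add_mset a1 (nb T + ub T + {#B, Box a1#})) a1" using Box.IH by blast
      then show "G4iSLt (nb (add_mset (Box a1) T) + ub (add_mset (Box a1) T) + {#B, Box a1#}) a1"
        by (simp add: ac_simps)
      show "G4iSLt (add_mset B (add_mset (Box a1) T)) C" using h by (simp add: add_mset_commute)
    qed
    then show ?thesis by (simp add: add_mset_commute)
  qed
  show ?case using id mp by blast
qed

lemma Id: "G4iSLt (add_mset A T) A" using id_mp by blast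
lemma MPL: "G4iSLt (add_mset A (add_mset B T)) C \<Longrightarrow> G4iSLt (add_mset A (add_mset (Imp A B) T)) C"
  using id_mp by blast


inductive_set Cl :: "form set \<Rightarrow> form set" for X where
  base: "y \<in> X \<Longrightarrow> y \<in> Cl X"
| andI: "a \<in> Cl X \<Longrightarrow> b \<in> Cl X \<Longrightarrow> And a b \<in> Cl X"
| orI1: "a \<in> Cl X \<Longrightarrow> Or a b \<in> Cl X"
| orI2: "b \<in> Cl X \<Longrightarrow> Or a b \<in> Cl X"
| impK: "b \<in> Cl X \<Longrightarrow> Imp a b \<in> Cl X"
| boxI: "a \<in> Cl X \<Longrightarrow> Box a \<in> Cl X"
| andImp: "Imp a (Imp b c) \<in> Cl X \<Longrightarrow> Imp (And a b) c \<in> Cl X"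
| orImp: "Imp a c \<in> Cl X \<Longrightarrow> Imp b c \<in> Cl X \<Longrightarrow> Imp (Or a b) c \<in> Cl X"
| impImp: "a \<in> Cl X \<Longrightarrow> Imp b c \<in> Cl X \<Longrightarrow> Imp (Imp a b) c \<in> Cl X"

lemma Cl_sub: "X \<subseteq> Cl Y \<Longrightarrow> Cl X \<subseteq> Cl Y"
proof
  fix y assume a: "X \<subseteq> Cl Y" and "y \<in> Cl X"
  from \<open>y \<in> Cl X\<close> show "y \<in> Cl Y" using a by (induction rule: Cl.induct) (auto intro: Cl.intros)
qed

lemma imp_mp: "G4iSLt T (Imp a b) \<Longrightarrow> G4iSLt (add_mset B (T + U)) C \<Longrightarrow> G4iSLt (add_mset (Imp (Imp a b) B) (T + U)) C"
proof -
  assume h1: "G4iSLt T (Imp a b)" and h2: "G4iSLt (add_mset B (T + U)) C"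
  have "G4iSLt (add_mset (Imp b B) (T + U)) (Imp a b)" using weak[OF weak_plus[OF h1]] by simp
  then show ?thesis using h2 by (rule G4iSLt.ImpImpL)
qed

definition MPp :: "form multiset \<Rightarrow> form \<Rightarrow> bool" where
  "MPp T y \<longleftrightarrow> (\<forall>U B C. G4iSLt (add_mset B (T + U)) C \<longrightarrow> G4iSLt (add_mset (Imp y B) (T + U)) C)"

lemma Cl_sound_aux: "y \<in> Cl (set_mset T) \<Longrightarrow> G4iSLt T y \<and> MPp T y"
proof (induction rule: Cl.induct)
  case (base y)
  then obtain T0 where T0: "T = add_mset y T0" by (metis multi_member_split)
  have "G4iSLt T y" using T0 Id by simp
  moreover have "MPp T y" unfolding MPp_def
  proof (intro allI impI)
    fix U B C assume "G4iSLt (add_mset B (T + U)) C"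
    then have "G4iSLt (add_mset y (add_mset B (T0 + U))) C" using T0 by (simp add: add_mset_commute)
    then have "G4iSLt (add_mset y (add_mset (Imp y B) (T0 + U))) C" by (rule MPL)
    then show "G4iSLt (add_mset (Imp y B) (T + U)) C" using T0 by (simp add: add_mset_commute)
  qed
  ultimately show ?case ..
next
  case (andI a b)
  have "G4iSLt T (And a b)" using andI.IH by (intro G4iSLt.AndR) auto
  moreover have "MPp T (And a b)" unfolding MPp_def
  proof (intro allI impI)
    fix U B C assume "G4iSLt (add_mset B (T + U)) C"
    then have "G4iSLt (add_mset (Imp b B) (T + U)) C" using andI.IH(2) unfolding MPp_def by blast
    then have "G4iSLt (add_mset (Imp a (Imp b B)) (T + U)) C" using andI.IH(1) unfolding MPp_def by blast
    then show "G4iSLt (add_mset (Imp (And a b) B) (T + U)) C" by (rule G4iSLt.AndImpL)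
  qed
  ultimately show ?case ..
next
  case (orI1 a b)
  have "G4iSLt T (Or a b)" using orI1.IH by (intro G4iSLt.OrR1) auto
  moreover have "MPp T (Or a b)" unfolding MPp_def
  proof (intro allI impI)
    fix U B C assume "G4iSLt (add_mset B (T + U)) C"
    then have "G4iSLt (add_mset (Imp b B) (add_mset B (T + U))) C" by (rule weak)
    then have "G4iSLt (add_mset B (T + (add_mset (Imp b B) U))) C" by (simp add: add_mset_commute)
    then have "G4iSLt (add_mset (Imp a B) (T + (add_mset (Imp b B) U))) C" using orI1.IH unfolding MPp_def by blast
    then have "G4iSLt (add_mset (Imp a B) (add_mset (Imp b B) (T + U))) C" by simp
    then show "G4iSLt (add_mset (Imp (Or a b) B) (T + U)) C" by (rule G4iSLt.OrImpL)
  qed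
  ultimately show ?case ..
next
  case (orI2 b a)
  have "G4iSLt T (Or a b)" using orI2.IH by (intro G4iSLt.OrR2) auto
  moreover have "MPp T (Or a b)" unfolding MPp_def
  proof (intro allI impI)
    fix U B C assume "G4iSLt (add_mset B (T + U)) C"
    then have "G4iSLt (add_mset (Imp a B) (add_mset B (T + U))) C" by (rule weak)
    then have "G4iSLt (add_mset B (T + (add_mset (Imp a B) U))) C" by (simp add: add_mset_commute)
    then have "G4iSLt (add_mset (Imp b B) (T + (add_mset (Imp a B) U))) C" using orI2.IH unfolding MPp_def by blast
    then have "G4iSLt (add_mset (Imp a B) (add_mset (Imp b B) (T + U))) C" by (simp add: add_mset_commute)
    then show "G4iSLt (add_mset (Imp (Or a b) B) (T + U)) C" by (rule G4iSLt.OrImpL)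
  qed
  ultimately show ?case ..
next
  case (impK b a)
  have s: "G4iSLt T (Imp a b)" using impK.IH weak by (intro G4iSLt.ImpR) auto
  moreover have "MPp T (Imp a b)" unfolding MPp_def using imp_mp[OF s] by blast
  ultimately show ?case ..
next
  case (boxI a)
  have s: "G4iSLt T (Box a)"
  proof (rule SLtR_gen)
    have "G4iSLt (nb T + ub T) a" using unbox_all boxI.IH by blast
    then show "G4iSLt (nb T + ub T + {#Box a#}) a" using weak by simp
  qed
  moreover have "MPp T (Box a)" unfolding MPp_def
  proof (intro allI impI)
    fix U B C assume h: "G4iSLt (add_mset B (T + U)) C"
    have "G4iSLt (nb (T + U) + ub (T + U)) a" using unbox_all weak_plus boxI.IH by blast
    then have "G4iSLt (nb (T + U) + ub (T + U) + {#B, Box a#}) a" using weak by simp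
    from BoxImpL_gen[OF this h] show "G4iSLt (add_mset (Imp (Box a) B) (T + U)) C" .
  qed
  ultimately show ?case ..
next
  case (andImp a b c)
  have s: "G4iSLt T (Imp (And a b) c)"
  proof -
    have "G4iSLt (add_mset b (add_mset a T)) c" using andImp.IH ImpR_inv by blast
    then have "G4iSLt (add_mset a (add_mset b T)) c" by (simp add: add_mset_commute)
    then show ?thesis by (intro G4iSLt.ImpR G4iSLt.AndL)
  qed
  moreover have "MPp T (Imp (And a b) c)" unfolding MPp_def using imp_mp[OF s] by blast
  ultimately show ?case ..
next
  case (orImp a c b)
  have s: "G4iSLt T (Imp (Or a b) c)"
    using orImp.IH ImpR_inv by (intro G4iSLt.ImpR G4iSLt.OrL) auto
  moreover have "MPp T (Imp (Or a b) c)" unfolding MPp_def using imp_mp[OF s] by blast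
  ultimately show ?case ..
next
  case (impImp a b c)
  have s: "G4iSLt T (Imp (Imp a b) c)"
  proof (rule G4iSLt.ImpR)
    have "G4iSLt (add_mset b (T + {#})) c" using impImp.IH(2) ImpR_inv by simp
    then have "G4iSLt (add_mset (Imp a b) (T + {#})) c" using impImp.IH(1) unfolding MPp_def by blast
    then show "G4iSLt (add_mset (Imp a b) T) c" by simp
  qed
  moreover have "MPp T (Imp (Imp a b) c)" unfolding MPp_def using imp_mp[OF s] by blast
  ultimately show ?case ..
qed

lemma Cl_sound: "y \<in> Cl (set_mset T) \<Longrightarrow> G4iSLt T y"
  using Cl_sound_aux by blast


record model =
  Wd :: "nat list set"
  Le :: "nat list \<Rightarrow> nat list \<Rightarrow> bool"
  Rl :: "nat list \<Rightarrow> nat list \<Rightarrow> bool"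
  Vl :: "nat list \<Rightarrow> nat \<Rightarrow> bool"
  Rk :: "nat list \<Rightarrow> nat"
  Bd :: nat

fun forces :: "model \<Rightarrow> nat list \<Rightarrow> form \<Rightarrow> bool" where
  "forces M w (Var p) = Vl M w p"
| "forces M w Bot = False"
| "forces M w (And a b) = (forces M w a \<and> forces M w b)"
| "forces M w (Or a b) = (forces M w a \<or> forces M w b)"
| "forces M w (Imp a b) = (\<forall>v\<in>Wd M. Le M w v \<longrightarrow> forces M v a \<longrightarrow> forces M v b)"
| "forces M w (Box a) = (\<forall>v\<in>Wd M. Rl M w v \<longrightarrow> forces M v a)"

definition valid :: "model \<Rightarrow> bool" where
  "valid M \<longleftrightarrow> (\<forall>w\<in>Wd M. Le M w w)
    \<and> (\<forall>u\<in>Wd M. \<forall>v\<in>Wd M. \<forall>w\<in>Wd M. Le M u v \<longrightarrow> Le M v w \<longrightarrow> Le M u w)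
    \<and> (\<forall>v\<in>Wd M. \<forall>w\<in>Wd M. Rl M v w \<longrightarrow> Le M v w)
    \<and> (\<forall>u\<in>Wd M. \<forall>v\<in>Wd M. \<forall>w\<in>Wd M. Le M u v \<longrightarrow> Rl M v w \<longrightarrow> Rl M u w)
    \<and> (\<forall>v\<in>Wd M. \<forall>w\<in>Wd M. Rl M v w \<longrightarrow> Rk M w < Rk M v)
    \<and> (\<forall>w\<in>Wd M. Rk M w < Bd M)
    \<and> (\<forall>v\<in>Wd M. \<forall>w\<in>Wd M. \<forall>p. Le M v w \<longrightarrow> Vl M v p \<longrightarrow> Vl M w p)"

lemma validD:
  assumes "valid M"
  shows "w \<in> Wd M \<Longrightarrow> Le M w w"
    and "u \<in> Wd M \<Longrightarrow> v \<in> Wd M \<Longrightarrow> w \<in> Wd M \<Longrightarrow> Le M u v \<Longrightarrow> Le M v w \<Longrightarrow> Le M u w"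
    and "v \<in> Wd M \<Longrightarrow> w \<in> Wd M \<Longrightarrow> Rl M v w \<Longrightarrow> Le M v w"
    and "u \<in> Wd M \<Longrightarrow> v \<in> Wd M \<Longrightarrow> w \<in> Wd M \<Longrightarrow> Le M u v \<Longrightarrow> Rl M v w \<Longrightarrow> Rl M u w"
    and "v \<in> Wd M \<Longrightarrow> w \<in> Wd M \<Longrightarrow> Rl M v w \<Longrightarrow> Rk M w < Rk M v"
    and "w \<in> Wd M \<Longrightarrow> Rk M w < Bd M"
    and "v \<in> Wd M \<Longrightarrow> w \<in> Wd M \<Longrightarrow> Le M v w \<Longrightarrow> Vl M v p \<Longrightarrow> Vl M w p"
  using assms unfolding valid_def by blast+

lemma persist: "valid M \<Longrightarrow> v \<in> Wd M \<Longrightarrow> w \<in> Wd M \<Longrightarrow> Le M v w \<Longrightarrow> forces M v A \<Longrightarrow> forces M w A"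
proof (induction A arbitrary: v w)
  case (Var p) then show ?case using validD(7)[of M v w p] by simp
next
  case Bot then show ?case by simp
next
  case (And a b) then show ?case using And.IH(1)[of v w] And.IH(2)[of v w] by simp
next
  case (Or a b) then show ?case using Or.IH(1)[of v w] Or.IH(2)[of v w] by (simp only: forces.simps) blast
next
  case (Imp a b)
  show ?case unfolding forces.simps
  proof (intro ballI impI)
    fix u assume u: "u \<in> Wd M" "Le M w u" "forces M u a"
    have "Le M v u" using validD(2)[OF Imp.prems(1) Imp.prems(2) Imp.prems(3) u(1) Imp.prems(4) u(2)] .
    then show "forces M u b" using Imp.prems(5) u unfolding forces.simps by blast
  qed
next
  case (Box a)
  show ?case unfolding forces.simps
  proof (intro ballI impI)
    fix u assume u: "u \<in> Wd M" "Rl M w u"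
    have "Rl M v u" using validD(4)[OF Box.prems(1) Box.prems(2) Box.prems(3) u(1) Box.prems(4) u(2)] .
    then show "forces M u a" using Box.prems(5) u unfolding forces.simps by blast
  qed
qed

lemma loeb: assumes M: "valid M" shows "v \<in> Wd M \<Longrightarrow> forces M v (Imp (Box a) a) \<Longrightarrow> forces M v a"
proof (induction "Rk M v" arbitrary: v rule: less_induct)
  case less
  have "forces M v (Box a)"
  proof (simp only: forces.simps, intro ballI impI)
    fix u assume u: "u \<in> Wd M" "Rl M v u"
    have "Le M v u" using validD(3)[OF M less.prems(1) u(1) u(2)] .
    then have "forces M u (Imp (Box a) a)" using persist[OF M less.prems(1) u(1)] less.prems(2) by blast
    then show "forces M u a" using less.hyps[OF validD(5)[OF M less.prems(1) u(1) u(2)] u(1)] by blast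
  qed
  then show ?case using less.prems validD(1)[OF M] by auto
qed

lemma axiom_sound: "axiom A \<Longrightarrow> valid M \<Longrightarrow> w \<in> Wd M \<Longrightarrow> forces M w A"
proof (induction rule: axiom.induct)
  case (A1 \<phi> \<psi>)
  then show ?case using persist by fastforce
next
  case (A2 \<phi> \<psi> \<chi>)
  show ?case
  proof (simp only: forces.simps, intro ballI impI)
    fix v1 v2 v3 assume v: "v1 \<in> Wd M" "v2 \<in> Wd M" "v3 \<in> Wd M" "Le M w v1" "Le M v1 v2" "Le M v2 v3"
      and h1: "\<forall>v\<in>Wd M. Le M v1 v \<longrightarrow> forces M v \<phi> \<longrightarrow> (\<forall>va\<in>Wd M. Le M v va \<longrightarrow> forces M va \<psi> \<longrightarrow> forces M va \<chi>)"
      and h2: "\<forall>v\<in>Wd M. Le M v2 v \<longrightarrow> forces M v \<phi> \<longrightarrow> forces M v \<psi>"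
      and h3: "forces M v3 \<phi>"
    have l13: "Le M v1 v3" using validD(2)[OF A2.prems(1) v(1) v(2) v(3) v(5) v(6)] .
    have "forces M v3 \<psi>" using h2 v(3) v(6) h3 by blast
    moreover have "Le M v3 v3" using validD(1)[OF A2.prems(1) v(3)] .
    ultimately show "forces M v3 \<chi>" using h1 v(3) l13 h3 by blast
  qed
next
  case (A3 \<phi> \<psi>) then show ?case by simp
next
  case (A4 \<psi> \<phi>) then show ?case by simp
next
  case (A5 \<phi> \<chi> \<psi>)
  show ?case
  proof (simp only: forces.simps, intro ballI impI)
    fix v1 v2 v3 assume v: "v1 \<in> Wd M" "v2 \<in> Wd M" "v3 \<in> Wd M" "Le M w v1" "Le M v1 v2" "Le M v2 v3"
      and h1: "\<forall>v\<in>Wd M. Le M v1 v \<longrightarrow> forces M v \<phi> \<longrightarrow> forces M v \<chi>"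
      and h2: "\<forall>v\<in>Wd M. Le M v2 v \<longrightarrow> forces M v \<psi> \<longrightarrow> forces M v \<chi>"
      and h3: "forces M v3 \<phi> \<or> forces M v3 \<psi>"
    have l13: "Le M v1 v3" using validD(2)[OF A5.prems(1) v(1) v(2) v(3) v(5) v(6)] .
    from h3 show "forces M v3 \<chi>" using h1 h2 l13 v by blast
  qed
next
  case (A6 \<phi> \<psi>) then show ?case by simp
next
  case (A7 \<phi> \<psi>) then show ?case by simp
next
  case (A8 \<phi> \<psi> \<chi>)
  show ?case
  proof (simp only: forces.simps, intro ballI impI conjI)
    fix v1 v2 v3 assume v: "v1 \<in> Wd M" "v2 \<in> Wd M" "v3 \<in> Wd M" "Le M w v1" "Le M v1 v2" "Le M v2 v3"
      and h1: "\<forall>v\<in>Wd M. Le M v1 v \<longrightarrow> forces M v \<phi> \<longrightarrow> forces M v \<psi>"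
      and h2: "\<forall>v\<in>Wd M. Le M v2 v \<longrightarrow> forces M v \<phi> \<longrightarrow> forces M v \<chi>"
      and h3: "forces M v3 \<phi>"
    have l13: "Le M v1 v3" using validD(2)[OF A8.prems(1) v(1) v(2) v(3) v(5) v(6)] .
    show "forces M v3 \<psi>" using h1 l13 h3 v by blast
    show "forces M v3 \<chi>" using h2 h3 v by blast
  qed
next
  case (A9 \<phi>) then show ?case by simp
next
  case (AK \<phi> \<psi>)
  show ?case
  proof (simp only: forces.simps, intro ballI impI)
    fix v1 v2 v3 assume v: "v1 \<in> Wd M" "v2 \<in> Wd M" "v3 \<in> Wd M" "Le M w v1" "Le M v1 v2" "Rl M v2 v3"
      and h1: "\<forall>v\<in>Wd M. Rl M v1 v \<longrightarrow> (\<forall>va\<in>Wd M. Le M v va \<longrightarrow> forces M va \<phi> \<longrightarrow> forces M va \<psi>)"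
      and h2: "\<forall>v\<in>Wd M. Rl M v2 v \<longrightarrow> forces M v \<phi>"
    have r13: "Rl M v1 v3" using validD(4)[OF AK.prems(1) v(1) v(2) v(3) v(5) v(6)] .
    show "forces M v3 \<psi>" using h1 h2 r13 v validD(1)[OF AK.prems(1) v(3)] by blast
  qed
next
  case (AGL \<phi>)
  have "\<forall>v\<in>Wd M. Le M w v \<longrightarrow> forces M v (Imp (Box \<phi>) \<phi>) \<longrightarrow> forces M v \<phi>"
    using loeb[OF AGL.prems(1)] by blast
  then show ?case by (simp only: forces.simps(5)[of M w])
qed

definition sem :: "form set \<Rightarrow> form \<Rightarrow> bool" where
  "sem G A \<longleftrightarrow> (\<forall>M w. valid M \<longrightarrow> w \<in> Wd M \<longrightarrow> (\<forall>g\<in>G. forces M w g) \<longrightarrow> forces M w A)"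

lemma hilbert_sound: "iSLH \<Gamma> \<phi> \<Longrightarrow> \<exists>G0. finite G0 \<and> G0 \<subseteq> \<Gamma> \<and> sem G0 \<phi>"
proof (induction rule: iSLH.induct)
  case (Ax \<phi> \<Gamma>)
  have "sem {} \<phi>" unfolding sem_def using axiom_sound[OF Ax] by blast
  then show ?case by blast
next
  case (El \<phi> \<Gamma>)
  have "sem {\<phi>} \<phi>" unfolding sem_def by blast
  then show ?case using El by blast
next
  case (Nec \<phi> \<Gamma>)
  then obtain G0 where "G0 \<subseteq> {}" "sem G0 \<phi>" by blast
  then have s: "sem {} \<phi>" by simp
  have "sem {} (Box \<phi>)" unfolding sem_def
  proof (intro allI impI)
    fix M w assume M: "valid M" and w: "w \<in> Wd M"
    show "forces M w (Box \<phi>)" unfolding forces.simps using s M unfolding sem_def by blast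
  qed
  then show ?case by blast
next
  case (MP \<Gamma> \<phi> \<psi>)
  then obtain G1 G2 where "finite G1" "G1 \<subseteq> \<Gamma>" "sem G1 \<phi>" "finite G2" "G2 \<subseteq> \<Gamma>" "sem G2 (Imp \<phi> \<psi>)" by blast
  have "sem (G1 \<union> G2) \<psi>" unfolding sem_def
  proof (intro allI impI)
    fix M w assume M: "valid M" and w: "w \<in> Wd M" and g: "\<forall>g\<in>G1 \<union> G2. forces M w g"
    have "forces M w \<phi>" using \<open>sem G1 \<phi>\<close> M w g unfolding sem_def by blast
    moreover have "forces M w (Imp \<phi> \<psi>)" using \<open>sem G2 (Imp \<phi> \<psi>)\<close> M w g unfolding sem_def by blast
    moreover have "Le M w w" using validD(1)[OF M w] .
    ultimately show "forces M w \<psi>" using w unfolding forces.simps(5)[of M w] by blast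
  qed
  moreover have "finite (G1 \<union> G2)" using \<open>finite G1\<close> \<open>finite G2\<close> by simp
  moreover have "G1 \<union> G2 \<subseteq> \<Gamma>" using \<open>G1 \<subseteq> \<Gamma>\<close> \<open>G2 \<subseteq> \<Gamma>\<close> by simp
  ultimately show ?case by blast
qed


definition refut :: "form multiset \<Rightarrow> form \<Rightarrow> bool" where
  "refut S C \<longleftrightarrow> (\<exists>M w. valid M \<and> w \<in> Wd M \<and> (\<forall>F\<in>#S. forces M w F) \<and> \<not> forces M w C)"

definition restr :: "model \<Rightarrow> nat list \<Rightarrow> model" where
  "restr M r = M\<lparr>Wd := {v \<in> Wd M. Le M r v}\<rparr>"

lemma restr_forces: "valid M \<Longrightarrow> r \<in> Wd M \<Longrightarrow> v \<in> Wd (restr M r) \<Longrightarrow> forces (restr M r) v A = forces M v A"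
proof (induction A arbitrary: v)
  case (Imp a b)
  have vW: "v \<in> Wd M" "Le M r v" using Imp.prems(3) by (auto simp: restr_def)
  have eq: "\<And>u. u \<in> Wd M \<Longrightarrow> Le M v u \<Longrightarrow> u \<in> Wd (restr M r)"
    using validD(2)[OF Imp.prems(1) Imp.prems(2) vW(1)] vW(2) by (auto simp: restr_def)
  show ?case
  proof
    assume h: "forces (restr M r) v (Imp a b)"
    show "forces M v (Imp a b)" unfolding forces.simps
    proof (intro ballI impI)
      fix u assume u: "u \<in> Wd M" "Le M v u" "forces M u a"
      have uR: "u \<in> Wd (restr M r)" using eq u by blast
      have "Le (restr M r) v u" using u by (simp add: restr_def)
      then show "forces M u b" using h uR Imp.IH[OF Imp.prems(1) Imp.prems(2) uR] u(3) by simp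
    qed
  next
    assume h: "forces M v (Imp a b)"
    show "forces (restr M r) v (Imp a b)" unfolding forces.simps
    proof (intro ballI impI)
      fix u assume u: "u \<in> Wd (restr M r)" "Le (restr M r) v u" "forces (restr M r) u a"
      have "u \<in> Wd M" "Le M v u" using u by (auto simp: restr_def)
      then show "forces (restr M r) u b" using h u Imp.IH[OF Imp.prems(1) Imp.prems(2) u(1)] by simp
    qed
  qed
next
  case (Box a)
  have vW: "v \<in> Wd M" "Le M r v" using Box.prems(3) by (auto simp: restr_def)
  have eq: "\<And>u. u \<in> Wd M \<Longrightarrow> Rl M v u \<Longrightarrow> u \<in> Wd (restr M r)"
    using validD(2)[OF Box.prems(1) Box.prems(2) vW(1)] validD(3)[OF Box.prems(1) vW(1)] vW(2) by (auto simp: restr_def)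
  show ?case
  proof
    assume h: "forces (restr M r) v (Box a)"
    show "forces M v (Box a)" unfolding forces.simps
    proof (intro ballI impI)
      fix u assume u: "u \<in> Wd M" "Rl M v u"
      have uR: "u \<in> Wd (restr M r)" using eq u by blast
      have "Rl (restr M r) v u" using u by (simp add: restr_def)
      then show "forces M u a" using h uR Box.IH[OF Box.prems(1) Box.prems(2) uR] by simp
    qed
  next
    assume h: "forces M v (Box a)"
    show "forces (restr M r) v (Box a)" unfolding forces.simps
    proof (intro ballI impI)
      fix u assume u: "u \<in> Wd (restr M r)" "Rl (restr M r) v u"
      have "u \<in> Wd M" "Rl M v u" using u by (auto simp: restr_def)
      then show "forces (restr M r) u a" using h u Box.IH[OF Box.prems(1) Box.prems(2) u(1)] by simp
    qed
  qed
qed (auto simp: restr_def)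

lemma valid_sub: assumes M: "valid M" and W: "W' \<subseteq> Wd M" shows "valid (M\<lparr>Wd := W'\<rparr>)"
proof -
  have eqs: "Wd (M\<lparr>Wd := W'\<rparr>) = W'" "Le (M\<lparr>Wd := W'\<rparr>) = Le M" "Rl (M\<lparr>Wd := W'\<rparr>) = Rl M"
    "Vl (M\<lparr>Wd := W'\<rparr>) = Vl M" "Rk (M\<lparr>Wd := W'\<rparr>) = Rk M" "Bd (M\<lparr>Wd := W'\<rparr>) = Bd M" by simp_all
  show ?thesis unfolding valid_def eqs
  proof (intro conjI)
  show "\<forall>w\<in>W'. Le M w w" using validD(1)[OF M] W by blast
  show "\<forall>u\<in>W'. \<forall>v\<in>W'. \<forall>w\<in>W'. Le M u v \<longrightarrow> Le M v w \<longrightarrow> Le M u w" using validD(2)[OF M] W by blast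
  show "\<forall>v\<in>W'. \<forall>w\<in>W'. Rl M v w \<longrightarrow> Le M v w" using validD(3)[OF M] W by blast
  show "\<forall>u\<in>W'. \<forall>v\<in>W'. \<forall>w\<in>W'. Le M u v \<longrightarrow> Rl M v w \<longrightarrow> Rl M u w" using validD(4)[OF M] W by blast
  show "\<forall>v\<in>W'. \<forall>w\<in>W'. Rl M v w \<longrightarrow> Rk M w < Rk M v" using validD(5)[OF M] W by blast
  show "\<forall>w\<in>W'. Rk M w < Bd M" using validD(6)[OF M] W by blast
  show "\<forall>v\<in>W'. \<forall>w\<in>W'. \<forall>p. Le M v w \<longrightarrow> Vl M v p \<longrightarrow> Vl M w p" using validD(7)[OF M] W by blast
  qed
qed

lemma restr_valid: "valid M \<Longrightarrow> r \<in> Wd M \<Longrightarrow> valid (restr M r)"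
  unfolding restr_def by (rule valid_sub) auto

lemma restr_root: "valid M \<Longrightarrow> r \<in> Wd M \<Longrightarrow> r \<in> Wd (restr M r) \<and> (\<forall>v\<in>Wd (restr M r). Le (restr M r) r v)"
  using validD(1) by (auto simp: restr_def)

definition rooted :: "model \<Rightarrow> nat list \<Rightarrow> bool" where
  "rooted M r \<longleftrightarrow> valid M \<and> r \<in> Wd M \<and> (\<forall>v\<in>Wd M. Le M r v)"

lemma refut_rooted: "refut S C \<Longrightarrow> \<exists>M r. rooted M r \<and> (\<forall>F\<in>#S. forces M r F) \<and> \<not> forces M r C"
proof -
  assume "refut S C"
  then obtain M w where M: "valid M" "w \<in> Wd M" "\<forall>F\<in>#S. forces M w F" "\<not> forces M w C"
    unfolding refut_def by blast
  have R: "rooted (restr M w) w" using restr_valid[OF M(1,2)] restr_root[OF M(1,2)] unfolding rooted_def by blast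
  have wR: "w \<in> Wd (restr M w)" using R unfolding rooted_def by blast
  show ?thesis using R M(3,4) restr_forces[OF M(1,2) wR] by blast
qed


definition gB :: "(model \<times> nat list) list \<Rightarrow> nat" where
  "gB ms = sum_list (map (Bd \<circ> fst) ms)"

definition glue :: "(model \<times> nat list) list \<Rightarrow> nat set \<Rightarrow> form set \<Rightarrow> model" where
  "glue ms P G = \<lparr> Wd = insert [] {i # v | i v. i < length ms \<and> v \<in> Wd (fst (ms ! i))},
     Le = (\<lambda>x y. x = [] \<or> (x \<noteq> [] \<and> y \<noteq> [] \<and> hd x = hd y \<and> Le (fst (ms ! hd x)) (tl x) (tl y))),
     Rl = (\<lambda>x y. (x = [] \<and> y \<noteq> [] \<and> (\<forall>g\<in>G. forces (fst (ms ! hd y)) (tl y) g))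
              \<or> (x \<noteq> [] \<and> y \<noteq> [] \<and> hd x = hd y \<and> Rl (fst (ms ! hd x)) (tl x) (tl y))),
     Vl = (\<lambda>x p. if x = [] then p \<in> P else Vl (fst (ms ! hd x)) (tl x) p),
     Rk = (\<lambda>x. if x = [] then gB ms else Rk (fst (ms ! hd x)) (tl x)),
     Bd = gB ms + 1 \<rparr>"

lemma glue_simps:
  "Wd (glue ms P G) = insert [] {i # v | i v. i < length ms \<and> v \<in> Wd (fst (ms ! i))}"
  "Le (glue ms P G) x y = (x = [] \<or> (x \<noteq> [] \<and> y \<noteq> [] \<and> hd x = hd y \<and> Le (fst (ms ! hd x)) (tl x) (tl y)))"
  "Rl (glue ms P G) x y = ((x = [] \<and> y \<noteq> [] \<and> (\<forall>g\<in>G. forces (fst (ms ! hd y)) (tl y) g))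
              \<or> (x \<noteq> [] \<and> y \<noteq> [] \<and> hd x = hd y \<and> Rl (fst (ms ! hd x)) (tl x) (tl y)))"
  "Vl (glue ms P G) x p = (if x = [] then p \<in> P else Vl (fst (ms ! hd x)) (tl x) p)"
  "Rk (glue ms P G) x = (if x = [] then gB ms else Rk (fst (ms ! hd x)) (tl x))"
  "Bd (glue ms P G) = gB ms + 1"
  by (simp_all add: glue_def)

lemma gB_ge: "i < length ms \<Longrightarrow> Bd (fst (ms ! i)) \<le> gB ms"
  unfolding gB_def by (metis comp_apply elem_le_sum_list length_map nth_map)

lemma glue_W_cases: "x \<in> Wd (glue ms P G) \<Longrightarrow> x = [] \<or> (\<exists>i v. x = i # v \<and> i < length ms \<and> v \<in> Wd (fst (ms ! i)))"
  by (auto simp: glue_simps)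

lemma glue_transfer:
  assumes i: "i < length ms" and v: "v \<in> Wd (fst (ms ! i))"
  shows "forces (glue ms P G) (i # v) A = forces (fst (ms ! i)) v A"
  using v
proof (induction A arbitrary: v)
  case (Imp a b)
  let ?M = "fst (ms ! i)"
  show ?case
  proof
    assume h: "forces (glue ms P G) (i # v) (Imp a b)"
    show "forces ?M v (Imp a b)" unfolding forces.simps
    proof (intro ballI impI)
      fix u assume u: "u \<in> Wd ?M" "Le ?M v u" "forces ?M u a"
      have "i # u \<in> Wd (glue ms P G)" using i u by (auto simp: glue_simps)
      moreover have "Le (glue ms P G) (i # v) (i # u)" using u by (simp add: glue_simps)
      ultimately show "forces ?M u b" using h u Imp.IH[OF u(1)] by auto
    qed
  next
    assume h: "forces ?M v (Imp a b)"
    show "forces (glue ms P G) (i # v) (Imp a b)" unfolding forces.simps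
    proof (intro ballI impI)
      fix y assume y: "y \<in> Wd (glue ms P G)" "Le (glue ms P G) (i # v) y" "forces (glue ms P G) y a"
      then obtain u where u: "y = i # u" "u \<in> Wd ?M" "Le ?M v u"
        by (auto simp: glue_simps)
      show "forces (glue ms P G) y b" using h y u Imp.IH[OF u(2)] by auto
    qed
  qed
next
  case (Box a)
  let ?M = "fst (ms ! i)"
  show ?case
  proof
    assume h: "forces (glue ms P G) (i # v) (Box a)"
    show "forces ?M v (Box a)" unfolding forces.simps
    proof (intro ballI impI)
      fix u assume u: "u \<in> Wd ?M" "Rl ?M v u"
      have "i # u \<in> Wd (glue ms P G)" using i u by (auto simp: glue_simps)
      moreover have "Rl (glue ms P G) (i # v) (i # u)" using u by (simp add: glue_simps)
      ultimately show "forces ?M u a" using h u Box.IH[OF u(1)] by auto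
    qed
  next
    assume h: "forces ?M v (Box a)"
    show "forces (glue ms P G) (i # v) (Box a)" unfolding forces.simps
    proof (intro ballI impI)
      fix y assume y: "y \<in> Wd (glue ms P G)" "Rl (glue ms P G) (i # v) y"
      then obtain u where u: "y = i # u" "u \<in> Wd ?M" "Rl ?M v u"
        by (auto simp: glue_simps)
      show "forces (glue ms P G) y a" using h y u Box.IH[OF u(2)] by auto
    qed
  qed
qed (auto simp: glue_simps)


definition gluable :: "(model \<times> nat list) list \<Rightarrow> nat set \<Rightarrow> form set \<Rightarrow> bool" where
  "gluable ms P G \<longleftrightarrow> (\<forall>i<length ms. rooted (fst (ms ! i)) (snd (ms ! i))
     \<and> (\<forall>p\<in>P. Vl (fst (ms ! i)) (snd (ms ! i)) p)
     \<and> (\<forall>g\<in>G. forces (fst (ms ! i)) (snd (ms ! i)) g \<or> forces (fst (ms ! i)) (snd (ms ! i)) (Box g)))"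

lemma glue_Le_cons: "y \<in> Wd (glue ms P G) \<Longrightarrow> Le (glue ms P G) (i # v) y \<Longrightarrow>
   \<exists>u. y = i # u \<and> u \<in> Wd (fst (ms ! i)) \<and> Le (fst (ms ! i)) v u"
  by (auto simp: glue_simps)

lemma glue_Rl_cons: "y \<in> Wd (glue ms P G) \<Longrightarrow> Rl (glue ms P G) (i # v) y \<Longrightarrow>
   \<exists>u. y = i # u \<and> u \<in> Wd (fst (ms ! i)) \<and> Rl (fst (ms ! i)) v u"
  by (auto simp: glue_simps)

lemma glue_valid: assumes gl: "gluable ms P G" shows "valid (glue ms P G)"
proof -
  let ?g = "glue ms P G"
  have Mi: "valid (fst (ms ! i))" "snd (ms ! i) \<in> Wd (fst (ms ! i))" "\<forall>v\<in>Wd (fst (ms ! i)). Le (fst (ms ! i)) (snd (ms ! i)) v"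
    "\<forall>p\<in>P. Vl (fst (ms ! i)) (snd (ms ! i)) p"
    "\<forall>g\<in>G. forces (fst (ms ! i)) (snd (ms ! i)) g \<or> forces (fst (ms ! i)) (snd (ms ! i)) (Box g)"
    if "i < length ms" for i using gl that unfolding gluable_def rooted_def by blast+
  show ?thesis unfolding valid_def
  proof (intro conjI)
    show "\<forall>w\<in>Wd ?g. Le ?g w w"
    proof
      fix w assume "w \<in> Wd ?g"
      then show "Le ?g w w" using glue_W_cases[of w] Mi(1) validD(1) by (auto simp: glue_simps)
    qed
    show "\<forall>u\<in>Wd ?g. \<forall>v\<in>Wd ?g. \<forall>w\<in>Wd ?g. Le ?g u v \<longrightarrow> Le ?g v w \<longrightarrow> Le ?g u w"
    proof (intro ballI impI)
      fix u v w assume W: "u \<in> Wd ?g" "v \<in> Wd ?g" "w \<in> Wd ?g" and l: "Le ?g u v" "Le ?g v w"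
      show "Le ?g u w"
      proof (cases "u = []")
        case True then show ?thesis by (simp add: glue_simps)
      next
        case False
        then obtain i u' where u: "u = i # u'" "i < length ms" "u' \<in> Wd (fst (ms ! i))" using glue_W_cases[OF W(1)] by blast
        obtain v' where v: "v = i # v'" "v' \<in> Wd (fst (ms ! i))" "Le (fst (ms ! i)) u' v'" using glue_Le_cons[OF W(2)] l(1) u by blast
        obtain w' where w: "w = i # w'" "w' \<in> Wd (fst (ms ! i))" "Le (fst (ms ! i)) v' w'" using glue_Le_cons[OF W(3)] l(2) v by blast
        have "Le (fst (ms ! i)) u' w'" using validD(2)[OF Mi(1)[OF u(2)] u(3) v(2) w(2) v(3) w(3)] .
        then show ?thesis using u w by (simp add: glue_simps)
      qed
    qed
    show "\<forall>v\<in>Wd ?g. \<forall>w\<in>Wd ?g. Rl ?g v w \<longrightarrow> Le ?g v w"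
    proof (intro ballI impI)
      fix v w assume W: "v \<in> Wd ?g" "w \<in> Wd ?g" and r: "Rl ?g v w"
      show "Le ?g v w"
      proof (cases "v = []")
        case True then show ?thesis by (simp add: glue_simps)
      next
        case False
        then obtain i v' where v: "v = i # v'" "i < length ms" "v' \<in> Wd (fst (ms ! i))" using glue_W_cases[OF W(1)] by blast
        obtain w' where w: "w = i # w'" "w' \<in> Wd (fst (ms ! i))" "Rl (fst (ms ! i)) v' w'" using glue_Rl_cons[OF W(2)] r v by blast
        have "Le (fst (ms ! i)) v' w'" using validD(3)[OF Mi(1)[OF v(2)] v(3) w(2) w(3)] .
        then show ?thesis using v w by (simp add: glue_simps)
      qed
    qed
    show "\<forall>u\<in>Wd ?g. \<forall>v\<in>Wd ?g. \<forall>w\<in>Wd ?g. Le ?g u v \<longrightarrow> Rl ?g v w \<longrightarrow> Rl ?g u w"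
    proof (intro ballI impI)
      fix u v w assume W: "u \<in> Wd ?g" "v \<in> Wd ?g" "w \<in> Wd ?g" and l: "Le ?g u v" and r: "Rl ?g v w"
      show "Rl ?g u w"
      proof (cases "v = []")
        case True
        then have "u = []" using l by (auto simp: glue_simps)
        then show ?thesis using r True by simp
      next
        case False
        then obtain i v' where v: "v = i # v'" "i < length ms" "v' \<in> Wd (fst (ms ! i))" using glue_W_cases[OF W(2)] by blast
        obtain w' where w: "w = i # w'" "w' \<in> Wd (fst (ms ! i))" "Rl (fst (ms ! i)) v' w'" using glue_Rl_cons[OF W(3)] r v by blast
        let ?M = "fst (ms ! i)" and ?r = "snd (ms ! i)"
        show ?thesis
        proof (cases "u = []")
          case True
          have "forces ?M w' g" if gG: "g \<in> G" for g
          proof -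
            have rv: "Le ?M ?r v'" using Mi(3)[OF v(2)] v(3) by blast
            have rw: "Le ?M ?r w'" using Mi(3)[OF v(2)] w(2) by blast
            have "forces ?M ?r g \<or> forces ?M ?r (Box g)" using Mi(5)[OF v(2)] gG by blast
            then show ?thesis
            proof
              assume "forces ?M ?r g"
              then show ?thesis using persist[OF Mi(1)[OF v(2)] Mi(2)[OF v(2)] w(2) rw] by blast
            next
              assume "forces ?M ?r (Box g)"
              then have "forces ?M v' (Box g)" using persist[OF Mi(1)[OF v(2)] Mi(2)[OF v(2)] v(3) rv] by blast
              then show ?thesis using w by simp
            qed
          qed
          then show ?thesis using True w by (simp add: glue_simps)
        next
          case False
          then obtain j u' where u: "u = j # u'" "j < length ms" "u' \<in> Wd (fst (ms ! j))" using glue_W_cases[OF W(1)] by blast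
          have "j = i" "Le ?M u' v'" using l u v by (auto simp: glue_simps)
          then have "Rl ?M u' w'" using validD(4)[OF Mi(1)[OF v(2)] _ v(3) w(2) _ w(3)] u by blast
          then show ?thesis using u w \<open>j = i\<close> by (simp add: glue_simps)
        qed
      qed
    qed
    show "\<forall>v\<in>Wd ?g. \<forall>w\<in>Wd ?g. Rl ?g v w \<longrightarrow> Rk ?g w < Rk ?g v"
    proof (intro ballI impI)
      fix v w assume W: "v \<in> Wd ?g" "w \<in> Wd ?g" and r: "Rl ?g v w"
      have "w \<noteq> []" using r by (auto simp: glue_simps)
      then obtain i w' where w: "w = i # w'" "i < length ms" "w' \<in> Wd (fst (ms ! i))" using glue_W_cases[OF W(2)] by blast
      show "Rk ?g w < Rk ?g v"
      proof (cases "v = []")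
        case True
        have "Rk (fst (ms ! i)) w' < Bd (fst (ms ! i))" using validD(6)[OF Mi(1)[OF w(2)] w(3)] .
        then show ?thesis using True w gB_ge[OF w(2)] by (simp add: glue_simps)
      next
        case False
        then obtain j v' where v: "v = j # v'" "j < length ms" "v' \<in> Wd (fst (ms ! j))" using glue_W_cases[OF W(1)] by blast
        have "j = i" "Rl (fst (ms ! i)) v' w'" using r v w by (auto simp: glue_simps)
        then show ?thesis using validD(5)[OF Mi(1)[OF w(2)] _ w(3)] v w by (simp add: glue_simps)
      qed
    qed
    show "\<forall>w\<in>Wd ?g. Rk ?g w < Bd ?g"
    proof
      fix w assume W: "w \<in> Wd ?g"
      show "Rk ?g w < Bd ?g"
      proof (cases "w = []")
        case True then show ?thesis by (simp add: glue_simps)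
      next
        case False
        then obtain i w' where w: "w = i # w'" "i < length ms" "w' \<in> Wd (fst (ms ! i))" using glue_W_cases[OF W] by blast
        have "Rk (fst (ms ! i)) w' < Bd (fst (ms ! i))" using validD(6)[OF Mi(1)[OF w(2)] w(3)] .
        then show ?thesis using w gB_ge[OF w(2)] by (simp add: glue_simps)
      qed
    qed
    show "\<forall>v\<in>Wd ?g. \<forall>w\<in>Wd ?g. \<forall>p. Le ?g v w \<longrightarrow> Vl ?g v p \<longrightarrow> Vl ?g w p"
    proof (intro ballI allI impI)
      fix v w p assume W: "v \<in> Wd ?g" "w \<in> Wd ?g" and l: "Le ?g v w" and vp: "Vl ?g v p"
      show "Vl ?g w p"
      proof (cases "w = []")
        case True
        then have "v = []" using l by (auto simp: glue_simps)
        then show ?thesis using True vp by simp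
      next
        case False
        then obtain i w' where w: "w = i # w'" "i < length ms" "w' \<in> Wd (fst (ms ! i))" using glue_W_cases[OF W(2)] by blast
        show ?thesis
        proof (cases "v = []")
          case True
          then have "p \<in> P" using vp by (simp add: glue_simps)
          then have "Vl (fst (ms ! i)) (snd (ms ! i)) p" using Mi(4)[OF w(2)] by blast
          then have "Vl (fst (ms ! i)) w' p" using validD(7)[OF Mi(1)[OF w(2)] Mi(2)[OF w(2)] w(3)] Mi(3)[OF w(2)] w(3) by blast
          then show ?thesis using w by (simp add: glue_simps)
        next
          case False
          then obtain j v' where v: "v = j # v'" "j < length ms" "v' \<in> Wd (fst (ms ! j))" using glue_W_cases[OF W(1)] by blast
          have "j = i" "Le (fst (ms ! i)) v' w'" using l v w by (auto simp: glue_simps)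
          moreover have "Vl (fst (ms ! i)) v' p" using vp v \<open>j = i\<close> by (simp add: glue_simps)
          ultimately show ?thesis using validD(7)[OF Mi(1)[OF w(2)] _ w(3)] v w by (simp add: glue_simps)
        qed
      qed
    qed
  qed
qed


lemma glue_root_W: "[] \<in> Wd (glue ms P G)" by (simp add: glue_simps)

lemma glue_sub_W: "i < length ms \<Longrightarrow> v \<in> Wd (fst (ms ! i)) \<Longrightarrow> i # v \<in> Wd (glue ms P G)"
  by (simp add: glue_simps)

lemma RF_all: assumes gl: "gluable ms P G" and i: "i < length ms" and f: "forces (glue ms P G) [] A"
  shows "forces (fst (ms ! i)) (snd (ms ! i)) A"
proof -
  have r: "snd (ms ! i) \<in> Wd (fst (ms ! i))" using gl i unfolding gluable_def rooted_def by blast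
  have "forces (glue ms P G) (i # snd (ms ! i)) A"
    using persist[OF glue_valid[OF gl] glue_root_W glue_sub_W[OF i r]] f by (simp add: glue_simps)
  then show ?thesis using glue_transfer[OF i r] by simp
qed

lemma RF_imp: assumes gl: "gluable ms P G"
  and h1: "forces (glue ms P G) [] A \<Longrightarrow> forces (glue ms P G) [] B"
  and h2: "\<forall>i<length ms. forces (fst (ms ! i)) (snd (ms ! i)) (Imp A B)"
  shows "forces (glue ms P G) [] (Imp A B)"
  unfolding forces.simps
proof (intro ballI impI)
  fix y assume y: "y \<in> Wd (glue ms P G)" "Le (glue ms P G) [] y" "forces (glue ms P G) y A"
  show "forces (glue ms P G) y B"
  proof (cases "y = []")
    case True then show ?thesis using h1 y by simp
  next
    case False
    then obtain i u where u: "y = i # u" "i < length ms" "u \<in> Wd (fst (ms ! i))" using glue_W_cases[OF y(1)] by blast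
    let ?M = "fst (ms ! i)" and ?r = "snd (ms ! i)"
    have M: "valid ?M" "?r \<in> Wd ?M" "Le ?M ?r u" using gl u unfolding gluable_def rooted_def by blast+
    have "forces ?M u (Imp A B)" using persist[OF M(1) M(2) u(3) M(3)] h2 u(2) by blast
    moreover have "forces ?M u A" using y(3) u glue_transfer by simp
    ultimately have "forces ?M u B" using validD(1)[OF M(1) u(3)] u(3) by auto
    then show ?thesis using u glue_transfer by simp
  qed
qed

lemma RF_box: assumes "g0 \<in> G" shows "forces (glue ms P G) [] (Box g0)"
  unfolding forces.simps
proof (intro ballI impI)
  fix y assume y: "y \<in> Wd (glue ms P G)" "Rl (glue ms P G) [] y"
  then obtain i u where u: "y = i # u" "i < length ms" "u \<in> Wd (fst (ms ! i))" using glue_W_cases[OF y(1)]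
    by (auto simp: glue_simps)
  have "forces (fst (ms ! i)) u g0" using y(2) u assms by (simp add: glue_simps)
  then show "forces (glue ms P G) y g0" using glue_transfer[OF u(2) u(3)] u by simp
qed

lemma RF_box_not: assumes gl: "gluable ms P G" and i: "i < length ms"
  and g: "\<forall>g\<in>G. forces (fst (ms ! i)) (snd (ms ! i)) g" and a: "\<not> forces (fst (ms ! i)) (snd (ms ! i)) a"
  shows "\<not> forces (glue ms P G) [] (Box a)"
proof
  assume h: "forces (glue ms P G) [] (Box a)"
  have r: "snd (ms ! i) \<in> Wd (fst (ms ! i))" using gl i unfolding gluable_def rooted_def by blast
  have "Rl (glue ms P G) [] (i # snd (ms ! i))" using g by (simp add: glue_simps)
  then have "forces (glue ms P G) (i # snd (ms ! i)) a" using h glue_sub_W[OF i r] by auto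
  then show False using glue_transfer[OF i r] a by simp
qed

lemma RF_imp_not: assumes gl: "gluable ms P G" and i: "i < length ms"
  and a: "forces (fst (ms ! i)) (snd (ms ! i)) a" and b: "\<not> forces (fst (ms ! i)) (snd (ms ! i)) b"
  shows "\<not> forces (glue ms P G) [] (Imp a b)"
proof
  assume h: "forces (glue ms P G) [] (Imp a b)"
  have r: "snd (ms ! i) \<in> Wd (fst (ms ! i))" using gl i unfolding gluable_def rooted_def by blast
  have "Le (glue ms P G) [] (i # snd (ms ! i))" by (simp add: glue_simps)
  moreover have "forces (glue ms P G) (i # snd (ms ! i)) a" using glue_transfer[OF i r] a by simp
  ultimately have "forces (glue ms P G) (i # snd (ms ! i)) b" using h glue_sub_W[OF i r] by auto
  then show False using glue_transfer[OF i r] b by simp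
qed

definition Good :: "form multiset \<Rightarrow> model \<Rightarrow> nat list \<Rightarrow> bool" where
  "Good S M r \<longleftrightarrow> (\<forall>F\<in>#S. \<not> is_box F \<longrightarrow> forces M r F) \<and> (\<forall>g\<in>#ub S. forces M r g \<or> forces M r (Box g))"

lemma in_ub: "g \<in># ub S \<longleftrightarrow> Box g \<in># S"
proof (induction S)
  case empty then show ?case by simp
next
  case (add x S) then show ?case by (cases x) auto
qed

lemma glue_refut:
  assumes ms: "\<forall>i<length ms. rooted (fst (ms ! i)) (snd (ms ! i)) \<and> Good S (fst (ms ! i)) (snd (ms ! i))"
  and shS: "\<forall>F\<in>#S. (\<exists>p. F = Var p) \<or> (\<exists>g. F = Box g) \<or> (\<exists>\<phi>. F = Imp Bot \<phi>)
      \<or> (\<exists>p \<phi>. F = Imp (Var p) \<phi> \<and> Var p \<notin># S)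
      \<or> (\<exists>a b c. F = Imp (Imp a b) c \<and> (\<exists>i<length ms. forces (fst (ms ! i)) (snd (ms ! i)) a \<and> \<not> forces (fst (ms ! i)) (snd (ms ! i)) b))
      \<or> (\<exists>a b. F = Imp (Box a) b \<and> (\<exists>i<length ms. (\<forall>g\<in>#ub S. forces (fst (ms ! i)) (snd (ms ! i)) g) \<and> \<not> forces (fst (ms ! i)) (snd (ms ! i)) a))"
  and shC: "C = Bot \<or> (\<exists>p. C = Var p \<and> Var p \<notin># S)
      \<or> (\<exists>a b. C = Or a b \<and> (\<exists>i<length ms. \<not> forces (fst (ms ! i)) (snd (ms ! i)) a) \<and> (\<exists>i<length ms. \<not> forces (fst (ms ! i)) (snd (ms ! i)) b))
      \<or> (\<exists>a. C = Box a \<and> (\<exists>i<length ms. (\<forall>g\<in>#ub S. forces (fst (ms ! i)) (snd (ms ! i)) g) \<and> \<not> forces (fst (ms ! i)) (snd (ms ! i)) a))"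
  shows "refut S C"
proof -
  let ?P = "{p. Var p \<in># S}" and ?G = "set_mset (ub S)"
  let ?g = "glue ms ?P ?G"
  have gl: "gluable ms ?P ?G" unfolding gluable_def
  proof (intro allI impI conjI)
    fix i assume i: "i < length ms"
    show "rooted (fst (ms ! i)) (snd (ms ! i))" using ms i by blast
    show "\<forall>p\<in>?P. Vl (fst (ms ! i)) (snd (ms ! i)) p"
    proof
      fix p assume "p \<in> ?P"
      then have "Var p \<in># S" by simp
      then have "forces (fst (ms ! i)) (snd (ms ! i)) (Var p)" using ms i unfolding Good_def by fastforce
      then show "Vl (fst (ms ! i)) (snd (ms ! i)) p" by simp
    qed
    show "\<forall>g\<in>?G. forces (fst (ms ! i)) (snd (ms ! i)) g \<or> forces (fst (ms ! i)) (snd (ms ! i)) (Box g)"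
      using ms i unfolding Good_def by auto
  qed
  have goodI: "\<forall>i<length ms. forces (fst (ms ! i)) (snd (ms ! i)) F" if "F \<in># S" "\<not> is_box F" for F
    using ms that unfolding Good_def by blast
  have forcesS: "forces ?g [] F" if F: "F \<in># S" for F
  proof -
    from shS F have h: "(\<exists>p. F = Var p) \<or> (\<exists>g. F = Box g) \<or> (\<exists>\<phi>. F = Imp Bot \<phi>)
      \<or> (\<exists>p \<phi>. F = Imp (Var p) \<phi> \<and> Var p \<notin># S)
      \<or> (\<exists>a b c. F = Imp (Imp a b) c \<and> (\<exists>i<length ms. forces (fst (ms ! i)) (snd (ms ! i)) a \<and> \<not> forces (fst (ms ! i)) (snd (ms ! i)) b))
      \<or> (\<exists>a b. F = Imp (Box a) b \<and> (\<exists>i<length ms. (\<forall>g\<in>#ub S. forces (fst (ms ! i)) (snd (ms ! i)) g) \<and> \<not> forces (fst (ms ! i)) (snd (ms ! i)) a))" by (rule bspec)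
    then consider (v) p where "F = Var p" | (b) g0 where "F = Box g0" | (ib) \<phi> where "F = Imp Bot \<phi>"
      | (iv) p \<phi> where "F = Imp (Var p) \<phi>" "Var p \<notin># S"
      | (ii) a b c i where "F = Imp (Imp a b) c" "i < length ms" "forces (fst (ms ! i)) (snd (ms ! i)) a" "\<not> forces (fst (ms ! i)) (snd (ms ! i)) b"
      | (bi) a b i where "F = Imp (Box a) b" "i < length ms" "\<forall>g\<in>#ub S. forces (fst (ms ! i)) (snd (ms ! i)) g" "\<not> forces (fst (ms ! i)) (snd (ms ! i)) a"
      by (elim disjE exE conjE) blast+
    then show ?thesis
    proof cases
      case v then show ?thesis using F by (simp add: glue_simps)
    next
      case b
      have "g0 \<in> ?G" using F b in_ub by simp
      then show ?thesis using RF_box[of g0 ?G ms ?P] b by simp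
    next
      case ib
      have "forces ?g [] (Imp Bot \<phi>)"
      proof (rule RF_imp[OF gl])
        show "forces ?g [] Bot \<Longrightarrow> forces ?g [] \<phi>" by simp
        show "\<forall>i<length ms. forces (fst (ms ! i)) (snd (ms ! i)) (Imp Bot \<phi>)" using goodI[OF F] ib by simp
      qed
      then show ?thesis using ib by simp
    next
      case iv
      have "forces ?g [] (Imp (Var p) \<phi>)"
      proof (rule RF_imp[OF gl])
        show "forces ?g [] (Var p) \<Longrightarrow> forces ?g [] \<phi>" using iv(2) by (simp add: glue_simps)
        show "\<forall>i<length ms. forces (fst (ms ! i)) (snd (ms ! i)) (Imp (Var p) \<phi>)" using goodI[OF F] iv by simp
      qed
      then show ?thesis using iv by simp
    next
      case ii
      have "forces ?g [] (Imp (Imp a b) c)"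
      proof (rule RF_imp[OF gl])
        show "forces ?g [] (Imp a b) \<Longrightarrow> forces ?g [] c" using RF_imp_not[OF gl ii(2-4)] by blast
        show "\<forall>i<length ms. forces (fst (ms ! i)) (snd (ms ! i)) (Imp (Imp a b) c)" using goodI[OF F] ii by simp
      qed
      then show ?thesis using ii by simp
    next
      case bi
      have nb: "\<not> forces ?g [] (Box a)" using RF_box_not[OF gl bi(2) _ bi(4)] bi(3) by simp
      have "forces ?g [] (Imp (Box a) b)"
      proof (rule RF_imp[OF gl])
        show "forces ?g [] (Box a) \<Longrightarrow> forces ?g [] b" using nb by blast
        show "\<forall>i<length ms. forces (fst (ms ! i)) (snd (ms ! i)) (Imp (Box a) b)" using goodI[OF F] bi by simp
      qed
      then show ?thesis using bi by simp
    qed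
  qed
  have notC: "\<not> forces ?g [] C"
  proof -
    from shC consider (bot) "C = Bot" | (v) p where "C = Var p" "Var p \<notin># S"
      | (o) a b i j where "C = Or a b" "i < length ms" "\<not> forces (fst (ms ! i)) (snd (ms ! i)) a"
          "j < length ms" "\<not> forces (fst (ms ! j)) (snd (ms ! j)) b"
      | (bx) a i where "C = Box a" "i < length ms" "\<forall>g\<in>#ub S. forces (fst (ms ! i)) (snd (ms ! i)) g" "\<not> forces (fst (ms ! i)) (snd (ms ! i)) a"
      by (elim disjE exE conjE) blast+
    then show ?thesis
    proof cases
      case bot then show ?thesis by simp
    next
      case v then show ?thesis by (simp add: glue_simps)
    next
      case o
      show ?thesis
      proof
        assume "forces ?g [] C"
        then have "forces ?g [] a \<or> forces ?g [] b" using o(1) by simp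
        then show False using RF_all[OF gl o(2), of a] RF_all[OF gl o(4), of b] o(3) o(5) by blast
      qed
    next
      case bx then show ?thesis using RF_box_not[OF gl bx(2) _ bx(4)] bx(3) by simp
    qed
  qed
  show ?thesis unfolding refut_def using glue_valid[OF gl] glue_root_W forcesS notC by blast
qed


fun bs :: "form \<Rightarrow> form set" where
  "bs (Var p) = {}" | "bs Bot = {}" | "bs (And a b) = bs a \<union> bs b" | "bs (Or a b) = bs a \<union> bs b"
| "bs (Imp a b) = bs a \<union> bs b" | "bs (Box a) = insert (Box a) (bs a)"

lemma finite_bs[simp]: "finite (bs F)" by (induction F) auto

definition BS :: "form multiset \<Rightarrow> form \<Rightarrow> form set" where
  "BS S C = bs C \<union> (\<Union>F\<in>set_mset S. bs F)"

lemma finite_BS[simp]: "finite (BS S C)" unfolding BS_def by auto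

definition mu :: "form multiset \<Rightarrow> form \<Rightarrow> nat" where
  "mu S C = card (BS S C - Cl (set_mset S))"

fun fw :: "form \<Rightarrow> nat" where
  "fw (Var p) = 1" | "fw Bot = 1" | "fw (And a b) = fw a + fw b + 2" | "fw (Or a b) = fw a + fw b + 2"
| "fw (Imp a b) = fw a + fw b + 1" | "fw (Box a) = fw a + 1"

lemma fw_pos: "fw F \<ge> 1" by (cases F) auto

definition wt :: "form \<Rightarrow> nat" where "wt F = 2 ^ fw F"

definition wsum :: "form multiset \<Rightarrow> form \<Rightarrow> nat" where
  "wsum S C = sum_mset (image_mset wt S) + wt C"

definition smaller :: "form multiset \<Rightarrow> form \<Rightarrow> form multiset \<Rightarrow> form \<Rightarrow> bool" where
  "smaller S' C' S C \<longleftrightarrow> ((mu S' C', wsum S' C'), (mu S C, wsum S C)) \<in> less_than <*lex*> less_than"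

lemma mu_le: assumes "BS S' C' \<subseteq> BS S C" "set_mset S \<subseteq> Cl (set_mset S')" shows "mu S' C' \<le> mu S C"
proof -
  have "Cl (set_mset S) \<subseteq> Cl (set_mset S')" using Cl_sub assms(2) by blast
  then have "BS S' C' - Cl (set_mset S') \<subseteq> BS S C - Cl (set_mset S)" using assms(1) by blast
  then show ?thesis unfolding mu_def by (intro card_mono) auto
qed

lemma mu_less: assumes "BS S' C' \<subseteq> BS S C" "set_mset S \<subseteq> Cl (set_mset S')"
  and "x \<in> BS S C" "x \<notin> Cl (set_mset S)" "x \<in> Cl (set_mset S')"
  shows "mu S' C' < mu S C"
proof -
  have "Cl (set_mset S) \<subseteq> Cl (set_mset S')" using Cl_sub assms(2) by blast
  then have "BS S' C' - Cl (set_mset S') \<subset> BS S C - Cl (set_mset S)" using assms by blast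
  then show ?thesis unfolding mu_def by (intro psubset_card_mono) auto
qed

lemma smallerI1: "BS S' C' \<subseteq> BS S C \<Longrightarrow> set_mset S \<subseteq> Cl (set_mset S') \<Longrightarrow> wsum S' C' < wsum S C \<Longrightarrow> smaller S' C' S C"
  using mu_le[of S' C' S C] unfolding smaller_def by (auto simp: le_less)

lemma smallerI2: "BS S' C' \<subseteq> BS S C \<Longrightarrow> set_mset S \<subseteq> Cl (set_mset S') \<Longrightarrow>
  x \<in> BS S C \<Longrightarrow> x \<notin> Cl (set_mset S) \<Longrightarrow> x \<in> Cl (set_mset S') \<Longrightarrow> smaller S' C' S C"
  using mu_less[of S' C' S C x] unfolding smaller_def by auto

lemma BS_add[simp]: "BS (add_mset F S) C = bs F \<union> BS S C" unfolding BS_def by auto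
lemma BS_plus: "BS (S + T) C = BS S C \<union> (\<Union>F\<in>set_mset T. bs F)" unfolding BS_def by auto

lemma wsum_add[simp]: "wsum (add_mset F S) C = wt F + wsum S C" unfolding wsum_def by simp

lemma Cl_base: "set_mset S \<subseteq> Cl (set_mset S)" by (auto intro: Cl.base)

lemma Cl_addI: "X \<in> Cl (set_mset (N + T)) \<Longrightarrow> set_mset (add_mset X T) \<subseteq> Cl (set_mset (N + T))"
  by (auto intro: Cl.base)

lemma bs_ub: "(\<Union>F\<in>set_mset (nb S + ub S). bs F) \<subseteq> (\<Union>F\<in>set_mset S. bs F)"
proof (induction S)
  case empty then show ?case by simp
next
  case (add x S) then show ?case by (cases x) auto
qed

lemma sum_ub: "sum_mset (image_mset wt (nb S + ub S)) \<le> sum_mset (image_mset wt S)"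
proof (induction S)
  case empty then show ?case by simp
next
  case (add x S) then show ?case by (cases x) (auto simp: wt_def)
qed

lemma Cl_ub: "set_mset S \<subseteq> Cl (set_mset (nb S + ub S + X))"
proof
  fix F assume F: "F \<in># S"
  show "F \<in> Cl (set_mset (nb S + ub S + X))"
  proof (cases "is_box F")
    case True
    then obtain g where g: "F = Box g" by (auto simp: is_box_def)
    then have "g \<in># ub S" using F in_ub by simp
    then show ?thesis using g by (auto intro: Cl.base Cl.boxI)
  next
    case False
    then have "F \<in># nb S" using F by (simp add: nb_def)
    then show ?thesis by (auto intro: Cl.base)
  qed
qed

lemma p2le: "x < n \<Longrightarrow> (2::nat) ^ x \<le> 2 ^ n div 2"
proof -
  assume "x < n"
  then obtain k where n: "n = Suc k" and "x \<le> k" by (cases n) auto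
  then have "(2::nat) ^ x \<le> 2 ^ k" by (simp add: power_increasing)
  then show ?thesis using n by simp
qed

lemma p2sum: "x < n \<Longrightarrow> y < n \<Longrightarrow> (2::nat) ^ x + 2 ^ y \<le> 2 ^ n"
proof -
  assume "x < n" "y < n"
  then have "(2::nat) ^ x \<le> 2 ^ n div 2" "(2::nat) ^ y \<le> 2 ^ n div 2" using p2le by blast+
  moreover have "(2::nat) ^ n div 2 + 2 ^ n div 2 \<le> 2 ^ n" by simp
  ultimately show ?thesis by linarith
qed

lemma p2less: "x < n \<Longrightarrow> (2::nat) ^ x < 2 ^ n" by simp

lemma wt_And: "wt a + wt b < wt (And a b)"
proof -
  have "wt a + wt b \<le> 2 ^ (fw a + fw b + 1)" unfolding wt_def using fw_pos[of a] fw_pos[of b] by (intro p2sum) auto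
  also have "... < wt (And a b)" unfolding wt_def by simp
  finally show ?thesis .
qed

lemma wt_Or1: "wt a < wt (Or a b)" unfolding wt_def by (intro p2less) simp
lemma wt_Or2: "wt b < wt (Or a b)" unfolding wt_def by (intro p2less) simp
lemma wt_And1: "wt a < wt (And a b)" unfolding wt_def by (intro p2less) simp
lemma wt_And2: "wt b < wt (And a b)" unfolding wt_def by (intro p2less) simp
lemma wt_Imp2: "wt b < wt (Imp a b)" unfolding wt_def by (intro p2less) simp

lemma wt_Imp: "wt a + wt b < wt (Imp a b)"
proof -
  have "wt a + wt b \<le> 2 ^ (fw a + fw b)" unfolding wt_def using fw_pos[of a] fw_pos[of b] by (intro p2sum) auto
  also have "... < wt (Imp a b)" unfolding wt_def by simp
  finally show ?thesis .
qed

lemma wt_AndImp: "wt (Imp a (Imp b c)) < wt (Imp (And a b) c)" unfolding wt_def by (intro p2less) simp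

lemma wt_OrImp: "wt (Imp a c) + wt (Imp b c) < wt (Imp (Or a b) c)"
proof -
  have "wt (Imp a c) + wt (Imp b c) \<le> 2 ^ (fw a + fw b + fw c + 2)" unfolding wt_def using fw_pos[of a] fw_pos[of b] by (intro p2sum) auto
  also have "... < wt (Imp (Or a b) c)" unfolding wt_def by simp
  finally show ?thesis .
qed

lemma wt_ImpImp: "wt a + wt (Imp b c) + wt b < wt (Imp (Imp a b) c)"
proof -
  have "wt a + wt b \<le> 2 ^ (fw a + fw b)" unfolding wt_def using fw_pos[of a] fw_pos[of b] by (intro p2sum) auto
  also have "(2::nat) ^ (fw a + fw b) + wt (Imp b c) \<le> 2 ^ (fw a + fw b + fw c + 1)"
    unfolding wt_def using fw_pos[of a] fw_pos[of b] fw_pos[of c] by (intro p2sum) auto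
  ultimately have "wt a + wt (Imp b c) + wt b \<le> 2 ^ (fw a + fw b + fw c + 1)" by linarith
  also have "... < wt (Imp (Imp a b) c)" unfolding wt_def by simp
  finally show ?thesis .
qed

lemma wt_BoxImp: "wt b + wt (Box a) + wt a < wt (Imp (Box a) b)"
proof -
  have "wt a + wt (Box a) \<le> 2 ^ (fw a + 2)" unfolding wt_def by (intro p2sum) auto
  also have "(2::nat) ^ (fw a + 2) \<le> 2 ^ (fw a + fw b + 1)" using fw_pos[of b] by (intro power_increasing) auto
  finally have 1: "wt a + wt (Box a) \<le> 2 ^ (fw a + fw b + 1)" .
  have 2: "wt b \<le> 2 ^ (fw a + fw b + 1) div 2" unfolding wt_def using fw_pos[of a] by (intro p2le) auto
  have "(2::nat) ^ (fw a + fw b + 1) + 2 ^ (fw a + fw b + 1) div 2 < 2 ^ (fw a + fw b + 2)" by simp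
  moreover have "wt (Imp (Box a) b) = 2 ^ (fw a + fw b + 2)" unfolding wt_def by simp
  ultimately show ?thesis using 1 2 by linarith
qed


lemma refut_mono: "refut S' C' \<Longrightarrow> (\<And>M w. valid M \<Longrightarrow> w \<in> Wd M \<Longrightarrow> \<forall>F\<in>#S'. forces M w F \<Longrightarrow> \<not> forces M w C'
   \<Longrightarrow> (\<forall>F\<in>#S. forces M w F) \<and> \<not> forces M w C) \<Longrightarrow> refut S C"
  unfolding refut_def by blast

lemma refut_mono': "refut S' C' \<Longrightarrow> (\<And>M w. valid M \<Longrightarrow> w \<in> Wd M \<Longrightarrow> \<forall>F\<in>#S'. forces M w F \<Longrightarrow> \<not> forces M w C'
   \<Longrightarrow> (\<forall>F\<in>#S. forces M w F) \<and> \<not> forces M w C) \<Longrightarrow> G4iSLt S C \<or> refut S C"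
  unfolding refut_def by blast

lemma step_AndL:
  assumes IH: "\<And>S' C'. smaller S' C' S C \<Longrightarrow> G4iSLt S' C' \<or> refut S' C'"
  and S: "S = add_mset (And a b) T"
  shows "G4iSLt S C \<or> refut S C"
proof -
  let ?S' = "{#a, b#} + T"
  have "smaller ?S' C S C"
  proof (rule smallerI1)
    show "BS ?S' C \<subseteq> BS S C" using S by auto
    have "And a b \<in> Cl (set_mset ?S')" by (auto intro: Cl.intros)
    then show "set_mset S \<subseteq> Cl (set_mset ?S')" using S Cl_addI by blast
    show "wsum ?S' C < wsum S C" using S wt_And[of a b] by simp
  qed
  then have "G4iSLt ?S' C \<or> refut ?S' C" by (rule IH)
  then show ?thesis
  proof
    assume "G4iSLt ?S' C"
    then show ?thesis using S by (simp add: G4iSLt.AndL)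
  next
    assume "refut ?S' C"
    then show ?thesis by (rule refut_mono') (auto simp: S)
  qed
qed

lemma step_OrL:
  assumes IH: "\<And>S' C'. smaller S' C' S C \<Longrightarrow> G4iSLt S' C' \<or> refut S' C'"
  and S: "S = add_mset (Or a b) T"
  shows "G4iSLt S C \<or> refut S C"
proof -
  have "smaller (add_mset a T) C S C"
  proof (rule smallerI1)
    show "BS (add_mset a T) C \<subseteq> BS S C" using S by auto
    have "Or a b \<in> Cl (set_mset ({#a#} + T))" by (auto intro: Cl.intros)
    then show "set_mset S \<subseteq> Cl (set_mset (add_mset a T))" using S Cl_addI[of "Or a b" "{#a#}" T] by simp
    show "wsum (add_mset a T) C < wsum S C" using S wt_Or1[of a b] by simp
  qed
  then have 1: "G4iSLt (add_mset a T) C \<or> refut (add_mset a T) C" by (rule IH)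
  have "smaller (add_mset b T) C S C"
  proof (rule smallerI1)
    show "BS (add_mset b T) C \<subseteq> BS S C" using S by auto
    have "Or a b \<in> Cl (set_mset ({#b#} + T))" by (auto intro: Cl.intros)
    then show "set_mset S \<subseteq> Cl (set_mset (add_mset b T))" using S Cl_addI[of "Or a b" "{#b#}" T] by simp
    show "wsum (add_mset b T) C < wsum S C" using S wt_Or2[of b a] by simp
  qed
  then have 2: "G4iSLt (add_mset b T) C \<or> refut (add_mset b T) C" by (rule IH)
  show ?thesis
  proof (cases "G4iSLt (add_mset a T) C \<and> G4iSLt (add_mset b T) C")
    case True then show ?thesis using S G4iSLt.OrL by blast
  next
    case False
    then have "refut (add_mset a T) C \<or> refut (add_mset b T) C" using 1 2 by blast
    then show ?thesis
    proof
      assume "refut (add_mset a T) C"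
      then show ?thesis by (rule refut_mono') (auto simp: S)
    next
      assume "refut (add_mset b T) C"
      then show ?thesis by (rule refut_mono') (auto simp: S)
    qed
  qed
qed

lemma step_VarImpL:
  assumes IH: "\<And>S' C'. smaller S' C' S C \<Longrightarrow> G4iSLt S' C' \<or> refut S' C'"
  and S: "S = add_mset (Var p) (add_mset (Imp (Var p) \<phi>) T)"
  shows "G4iSLt S C \<or> refut S C"
proof -
  let ?S' = "add_mset (Var p) (add_mset \<phi> T)"
  have "smaller ?S' C S C"
  proof (rule smallerI1)
    show "BS ?S' C \<subseteq> BS S C" using S by auto
    have "Imp (Var p) \<phi> \<in> Cl (set_mset ?S')" by (auto intro: Cl.intros)
    then show "set_mset S \<subseteq> Cl (set_mset ?S')" using S by (auto intro: Cl.base)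
    show "wsum ?S' C < wsum S C" using S wt_Imp2[of \<phi> "Var p"] by simp
  qed
  then have "G4iSLt ?S' C \<or> refut ?S' C" by (rule IH)
  then show ?thesis
  proof
    assume "G4iSLt ?S' C"
    then show ?thesis using S by (simp add: G4iSLt.VarImpL)
  next
    assume "refut ?S' C"
    then show ?thesis
    proof (rule refut_mono')
      fix M w assume M: "valid M" "w \<in> Wd M" "\<forall>F\<in>#?S'. forces M w F" "\<not> forces M w C"
      have "forces M w (Imp (Var p) \<phi>)" unfolding forces.simps
        using persist[OF M(1) M(2)] M(3) by auto
      then show "(\<forall>F\<in>#S. forces M w F) \<and> \<not> forces M w C" using M S by auto
    qed
  qed
qed

lemma step_AndImpL:
  assumes IH: "\<And>S' C'. smaller S' C' S C \<Longrightarrow> G4iSLt S' C' \<or> refut S' C'"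
  and S: "S = add_mset (Imp (And a b) c) T"
  shows "G4iSLt S C \<or> refut S C"
proof -
  let ?S' = "add_mset (Imp a (Imp b c)) T"
  have "smaller ?S' C S C"
  proof (rule smallerI1)
    show "BS ?S' C \<subseteq> BS S C" using S by auto
    have "Imp (And a b) c \<in> Cl (set_mset ({#Imp a (Imp b c)#} + T))" by (auto intro: Cl.intros)
    then show "set_mset S \<subseteq> Cl (set_mset ?S')" using S Cl_addI[of _ "{#Imp a (Imp b c)#}" T] by simp
    show "wsum ?S' C < wsum S C" using S wt_AndImp[of a b c] by simp
  qed
  then have "G4iSLt ?S' C \<or> refut ?S' C" by (rule IH)
  then show ?thesis
  proof
    assume "G4iSLt ?S' C"
    then show ?thesis using S by (simp add: G4iSLt.AndImpL)
  next
    assume "refut ?S' C"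
    then show ?thesis
    proof (rule refut_mono')
      fix M w assume M: "valid M" "w \<in> Wd M" "\<forall>F\<in>#?S'. forces M w F" "\<not> forces M w C"
      have h: "forces M w (Imp a (Imp b c))" using M(3) by simp
      have "forces M w (Imp (And a b) c)" unfolding forces.simps(5)[of M w]
      proof (intro ballI impI)
        fix v assume v: "v \<in> Wd M" "Le M w v" "forces M v (And a b)"
        then have "forces M v (Imp b c)" using h by auto
        then show "forces M v c" using v validD(1)[OF M(1) v(1)] by auto
      qed
      then show "(\<forall>F\<in>#S. forces M w F) \<and> \<not> forces M w C" using M S by auto
    qed
  qed
qed

lemma step_OrImpL:
  assumes IH: "\<And>S' C'. smaller S' C' S C \<Longrightarrow> G4iSLt S' C' \<or> refut S' C'"
  and S: "S = add_mset (Imp (Or a b) c) T"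
  shows "G4iSLt S C \<or> refut S C"
proof -
  let ?S' = "add_mset (Imp a c) (add_mset (Imp b c) T)"
  have "smaller ?S' C S C"
  proof (rule smallerI1)
    show "BS ?S' C \<subseteq> BS S C" using S by auto
    have "Imp (Or a b) c \<in> Cl (set_mset ({#Imp a c, Imp b c#} + T))" by (auto intro: Cl.intros)
    then show "set_mset S \<subseteq> Cl (set_mset ?S')" using S Cl_addI[of _ "{#Imp a c, Imp b c#}" T] by simp
    show "wsum ?S' C < wsum S C" using S wt_OrImp[of a c b] by simp
  qed
  then have "G4iSLt ?S' C \<or> refut ?S' C" by (rule IH)
  then show ?thesis
  proof
    assume "G4iSLt ?S' C"
    then show ?thesis using S by (simp add: G4iSLt.OrImpL)
  next
    assume "refut ?S' C"
    then show ?thesis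
    proof (rule refut_mono')
      fix M w assume M: "valid M" "w \<in> Wd M" "\<forall>F\<in>#?S'. forces M w F" "\<not> forces M w C"
      have h1: "forces M w (Imp a c)" and h2: "forces M w (Imp b c)" using M(3) by auto
      have "forces M w (Imp (Or a b) c)" unfolding forces.simps(5)[of M w]
      proof (intro ballI impI)
        fix v assume v: "v \<in> Wd M" "Le M w v" "forces M v (Or a b)"
        then show "forces M v c" using h1 h2 by auto
      qed
      then show "(\<forall>F\<in>#S. forces M w F) \<and> \<not> forces M w C" using M S by auto
    qed
  qed
qed

lemma step_AndR:
  assumes IH: "\<And>S' C'. smaller S' C' S C \<Longrightarrow> G4iSLt S' C' \<or> refut S' C'"
  and C: "C = And a b"
  shows "G4iSLt S C \<or> refut S C"
proof -
  have "smaller S a S C" using C wt_And1[of a b] by (intro smallerI1) (auto simp: BS_def wsum_def intro: Cl.base)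
  then have 1: "G4iSLt S a \<or> refut S a" by (rule IH)
  have "smaller S b S C" using C wt_And2[of b a] by (intro smallerI1) (auto simp: BS_def wsum_def intro: Cl.base)
  then have 2: "G4iSLt S b \<or> refut S b" by (rule IH)
  show ?thesis
  proof (cases "G4iSLt S a \<and> G4iSLt S b")
    case True then show ?thesis using C G4iSLt.AndR by blast
  next
    case False
    then have "refut S a \<or> refut S b" using 1 2 by blast
    then show ?thesis
    proof
      assume "refut S a"
      then show ?thesis by (rule refut_mono') (auto simp: C)
    next
      assume "refut S b"
      then show ?thesis by (rule refut_mono') (auto simp: C)
    qed
  qed
qed

lemma step_ImpR:
  assumes IH: "\<And>S' C'. smaller S' C' S C \<Longrightarrow> G4iSLt S' C' \<or> refut S' C'"
  and C: "C = Imp a b"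
  shows "G4iSLt S C \<or> refut S C"
proof -
  have "smaller (add_mset a S) b S C"
  proof (rule smallerI1)
    show "BS (add_mset a S) b \<subseteq> BS S C" using C by (auto simp: BS_def)
    show "set_mset S \<subseteq> Cl (set_mset (add_mset a S))" by (auto intro: Cl.base)
    show "wsum (add_mset a S) b < wsum S C" using C wt_Imp[of a b] by (simp add: wsum_def)
  qed
  then have "G4iSLt (add_mset a S) b \<or> refut (add_mset a S) b" by (rule IH)
  then show ?thesis
  proof
    assume "G4iSLt (add_mset a S) b"
    then show ?thesis using C G4iSLt.ImpR by blast
  next
    assume "refut (add_mset a S) b"
    then show ?thesis
    proof (rule refut_mono')
      fix M w assume M: "valid M" "w \<in> Wd M" "\<forall>F\<in>#add_mset a S. forces M w F" "\<not> forces M w b"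
      have "\<not> forces M w (Imp a b)" using M validD(1)[OF M(1) M(2)] by auto
      then show "(\<forall>F\<in>#S. forces M w F) \<and> \<not> forces M w C" using M C by auto
    qed
  qed
qed


lemma glue_refut2:
  assumes ms: "\<forall>m\<in>set ms. rooted (fst m) (snd m) \<and> Good S (fst m) (snd m)"
  and shS: "\<forall>F\<in>#S. (\<exists>p. F = Var p) \<or> (\<exists>g. F = Box g) \<or> (\<exists>\<phi>. F = Imp Bot \<phi>)
      \<or> (\<exists>p \<phi>. F = Imp (Var p) \<phi> \<and> Var p \<notin># S)
      \<or> (\<exists>a b c. F = Imp (Imp a b) c \<and> (\<exists>m\<in>set ms. forces (fst m) (snd m) a \<and> \<not> forces (fst m) (snd m) b))
      \<or> (\<exists>a b. F = Imp (Box a) b \<and> (\<exists>m\<in>set ms. (\<forall>g\<in>#ub S. forces (fst m) (snd m) g) \<and> \<not> forces (fst m) (snd m) a))"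
  and shC: "C = Bot \<or> (\<exists>p. C = Var p \<and> Var p \<notin># S)
      \<or> (\<exists>a b. C = Or a b \<and> (\<exists>m\<in>set ms. \<not> forces (fst m) (snd m) a) \<and> (\<exists>m\<in>set ms. \<not> forces (fst m) (snd m) b))
      \<or> (\<exists>a. C = Box a \<and> (\<exists>m\<in>set ms. (\<forall>g\<in>#ub S. forces (fst m) (snd m) g) \<and> \<not> forces (fst m) (snd m) a))"
  shows "refut S C"
proof (rule glue_refut)
  have ex: "\<And>P. (\<exists>m\<in>set ms. P m) \<Longrightarrow> (\<exists>i<length ms. P (ms ! i))" by (metis in_set_conv_nth)
  show "\<forall>i<length ms. rooted (fst (ms ! i)) (snd (ms ! i)) \<and> Good S (fst (ms ! i)) (snd (ms ! i))"
    using ms by auto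
  show "\<forall>F\<in>#S. (\<exists>p. F = Var p) \<or> (\<exists>g. F = Box g) \<or> (\<exists>\<phi>. F = Imp Bot \<phi>)
      \<or> (\<exists>p \<phi>. F = Imp (Var p) \<phi> \<and> Var p \<notin># S)
      \<or> (\<exists>a b c. F = Imp (Imp a b) c \<and> (\<exists>i<length ms. forces (fst (ms ! i)) (snd (ms ! i)) a \<and> \<not> forces (fst (ms ! i)) (snd (ms ! i)) b))
      \<or> (\<exists>a b. F = Imp (Box a) b \<and> (\<exists>i<length ms. (\<forall>g\<in>#ub S. forces (fst (ms ! i)) (snd (ms ! i)) g) \<and> \<not> forces (fst (ms ! i)) (snd (ms ! i)) a))"
  proof
    fix F assume F: "F \<in># S"
    from shS F have "(\<exists>p. F = Var p) \<or> (\<exists>g. F = Box g) \<or> (\<exists>\<phi>. F = Imp Bot \<phi>)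
      \<or> (\<exists>p \<phi>. F = Imp (Var p) \<phi> \<and> Var p \<notin># S)
      \<or> (\<exists>a b c. F = Imp (Imp a b) c \<and> (\<exists>m\<in>set ms. forces (fst m) (snd m) a \<and> \<not> forces (fst m) (snd m) b))
      \<or> (\<exists>a b. F = Imp (Box a) b \<and> (\<exists>m\<in>set ms. (\<forall>g\<in>#ub S. forces (fst m) (snd m) g) \<and> \<not> forces (fst m) (snd m) a))"
      by (rule bspec)
    then show "(\<exists>p. F = Var p) \<or> (\<exists>g. F = Box g) \<or> (\<exists>\<phi>. F = Imp Bot \<phi>)
      \<or> (\<exists>p \<phi>. F = Imp (Var p) \<phi> \<and> Var p \<notin># S)
      \<or> (\<exists>a b c. F = Imp (Imp a b) c \<and> (\<exists>i<length ms. forces (fst (ms ! i)) (snd (ms ! i)) a \<and> \<not> forces (fst (ms ! i)) (snd (ms ! i)) b))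
      \<or> (\<exists>a b. F = Imp (Box a) b \<and> (\<exists>i<length ms. (\<forall>g\<in>#ub S. forces (fst (ms ! i)) (snd (ms ! i)) g) \<and> \<not> forces (fst (ms ! i)) (snd (ms ! i)) a))"
    proof (elim disjE exE conjE)
      fix a b c assume "F = Imp (Imp a b) c" "\<exists>m\<in>set ms. forces (fst m) (snd m) a \<and> \<not> forces (fst m) (snd m) b"
      then show ?thesis using ex[of "\<lambda>m. forces (fst m) (snd m) a \<and> \<not> forces (fst m) (snd m) b"] by blast
    next
      fix a b assume "F = Imp (Box a) b" "\<exists>m\<in>set ms. (\<forall>g\<in>#ub S. forces (fst m) (snd m) g) \<and> \<not> forces (fst m) (snd m) a"
      then show ?thesis using ex[of "\<lambda>m. (\<forall>g\<in>#ub S. forces (fst m) (snd m) g) \<and> \<not> forces (fst m) (snd m) a"] by blast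
    qed blast+
  qed
  from shC show "C = Bot \<or> (\<exists>p. C = Var p \<and> Var p \<notin># S)
      \<or> (\<exists>a b. C = Or a b \<and> (\<exists>i<length ms. \<not> forces (fst (ms ! i)) (snd (ms ! i)) a) \<and> (\<exists>i<length ms. \<not> forces (fst (ms ! i)) (snd (ms ! i)) b))
      \<or> (\<exists>a. C = Box a \<and> (\<exists>i<length ms. (\<forall>g\<in>#ub S. forces (fst (ms ! i)) (snd (ms ! i)) g) \<and> \<not> forces (fst (ms ! i)) (snd (ms ! i)) a))"
  proof (elim disjE exE conjE)
    fix a b assume "C = Or a b" "\<exists>m\<in>set ms. \<not> forces (fst m) (snd m) a" "\<exists>m\<in>set ms. \<not> forces (fst m) (snd m) b"
    then show ?thesis using ex[of "\<lambda>m. \<not> forces (fst m) (snd m) a"] ex[of "\<lambda>m. \<not> forces (fst m) (snd m) b"] by blast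
  next
    fix a assume "C = Box a" "\<exists>m\<in>set ms. (\<forall>g\<in>#ub S. forces (fst m) (snd m) g) \<and> \<not> forces (fst m) (snd m) a"
    then show ?thesis using ex[of "\<lambda>m. (\<forall>g\<in>#ub S. forces (fst m) (snd m) g) \<and> \<not> forces (fst m) (snd m) a"] by blast
  qed blast+
qed

lemma sm_II2: "S = add_mset (Imp (Imp a b) c) T \<Longrightarrow> smaller (add_mset c T) C S C"
proof (rule smallerI1)
  assume S: "S = add_mset (Imp (Imp a b) c) T"
  show "BS (add_mset c T) C \<subseteq> BS S C" using S by auto
  have "Imp (Imp a b) c \<in> Cl (set_mset ({#c#} + T))" by (auto intro: Cl.intros)
  then show "set_mset S \<subseteq> Cl (set_mset (add_mset c T))" using S Cl_addI[of _ "{#c#}" T] by simp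
  show "wsum (add_mset c T) C < wsum S C" using S wt_Imp2[of c "Imp a b"] by simp
qed

lemma sm_II1: "S = add_mset (Imp (Imp a b) c) T \<Longrightarrow> smaller (add_mset a (add_mset (Imp b c) T)) b S C"
proof (rule smallerI1)
  assume S: "S = add_mset (Imp (Imp a b) c) T"
  show "BS (add_mset a (add_mset (Imp b c) T)) b \<subseteq> BS S C" using S by (auto simp: BS_def)
  have "Imp (Imp a b) c \<in> Cl (set_mset ({#a, Imp b c#} + T))" by (auto intro: Cl.intros)
  then show "set_mset S \<subseteq> Cl (set_mset (add_mset a (add_mset (Imp b c) T)))" using S Cl_addI[of _ "{#a, Imp b c#}" T] by simp
  show "wsum (add_mset a (add_mset (Imp b c) T)) b < wsum S C" using S wt_ImpImp[of a b c] by (simp add: wsum_def)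
qed

lemma sm_BI2: "S = add_mset (Imp (Box a) b) T \<Longrightarrow> smaller (add_mset b T) C S C"
proof (rule smallerI1)
  assume S: "S = add_mset (Imp (Box a) b) T"
  show "BS (add_mset b T) C \<subseteq> BS S C" using S by auto
  have "Imp (Box a) b \<in> Cl (set_mset ({#b#} + T))" by (auto intro: Cl.intros)
  then show "set_mset S \<subseteq> Cl (set_mset (add_mset b T))" using S Cl_addI[of _ "{#b#}" T] by simp
  show "wsum (add_mset b T) C < wsum S C" using S wt_Imp2[of b "Box a"] by simp
qed

lemma sm_BI1: "S = add_mset (Imp (Box a) b) T \<Longrightarrow> smaller (nb T + ub T + {#b, Box a#}) a S C"
proof (rule smallerI1)
  assume S: "S = add_mset (Imp (Box a) b) T"
  show "BS (nb T + ub T + {#b, Box a#}) a \<subseteq> BS S C"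
    using S bs_ub[of T] by (auto simp: BS_def)
  have "set_mset T \<subseteq> Cl (set_mset (nb T + ub T + {#b, Box a#}))" by (rule Cl_ub)
  moreover have "Imp (Box a) b \<in> Cl (set_mset (nb T + ub T + {#b, Box a#}))" by (auto intro: Cl.intros)
  ultimately show "set_mset S \<subseteq> Cl (set_mset (nb T + ub T + {#b, Box a#}))" using S by simp
  have "sum_mset (image_mset wt (nb T + ub T)) \<le> sum_mset (image_mset wt T)" by (rule sum_ub)
  then show "wsum (nb T + ub T + {#b, Box a#}) a < wsum S C" using S wt_BoxImp[of b a]
    by (simp add: wsum_def)
qed

lemma sm_SLtR: "Box a \<notin> Cl (set_mset S) \<Longrightarrow> smaller (nb S + ub S + {#Box a#}) a S (Box a)"
proof (rule smallerI2)
  show "BS (nb S + ub S + {#Box a#}) a \<subseteq> BS S (Box a)" using bs_ub[of S] by (auto simp: BS_def)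
  show "set_mset S \<subseteq> Cl (set_mset (nb S + ub S + {#Box a#}))" by (rule Cl_ub)
  show "Box a \<in> BS S (Box a)" by (simp add: BS_def)
  show "Box a \<in> Cl (set_mset (nb S + ub S + {#Box a#}))" by (auto intro: Cl.base)
qed

lemma sm_Or1: "smaller S a S (Or a b)"
  using wt_Or1[of a b] by (intro smallerI1) (auto simp: BS_def wsum_def intro: Cl.base)
lemma sm_Or2: "smaller S b S (Or a b)"
  using wt_Or2[of b a] by (intro smallerI1) (auto simp: BS_def wsum_def intro: Cl.base)

lemma pr_II: "G4iSLt (add_mset c T) C \<Longrightarrow> G4iSLt (add_mset a (add_mset (Imp b c) T)) b \<Longrightarrow> G4iSLt (add_mset (Imp (Imp a b) c) T) C"
  by (rule G4iSLt.ImpImpL) (rule G4iSLt.ImpR)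

lemma pr_BI: "G4iSLt (add_mset b T) C \<Longrightarrow> G4iSLt (nb T + ub T + {#b, Box a#}) a \<Longrightarrow> G4iSLt (add_mset (Imp (Box a) b) T) C"
  using BoxImpL_gen by blast


lemma semImp2: assumes "F = Imp A c" "F \<in># S" "refut (add_mset c (S - {#F#})) C" shows "refut S C"
proof -
  from assms(3) obtain M w where M: "valid M" "w \<in> Wd M" "\<forall>G\<in>#add_mset c (S - {#F#}). forces M w G" "\<not> forces M w C"
    unfolding refut_def by blast
  have "forces M w F" unfolding assms(1) forces.simps(5)[of M w]
    using persist[OF M(1) M(2)] M(3) by auto
  moreover have "S = add_mset F (S - {#F#})" using assms(2) by simp
  ultimately have "\<forall>G\<in>#S. forces M w G" using M(3) by (metis insert_iff set_mset_add_mset_insert)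
  then show ?thesis unfolding refut_def using M by blast
qed

lemma goodII: assumes X: "X = Imp (Imp a b) c" "X \<in># S" and R: "rooted M r"
  and f: "\<forall>F\<in>#add_mset a (add_mset (Imp b c) (S - {#X#})). forces M r F"
  shows "Good S M r"
proof -
  have M: "valid M" "r \<in> Wd M" using R unfolding rooted_def by auto
  have fa: "forces M r a" and fbc: "forces M r (Imp b c)" using f by auto
  have fX: "forces M r X" unfolding X(1) forces.simps(5)[of M r]
  proof (intro ballI impI)
    fix v assume v: "v \<in> Wd M" "Le M r v" "forces M v (Imp a b)"
    have "forces M v a" using persist[OF M(1) M(2) v(1) v(2) fa] .
    then have "forces M v b" using v(3) validD(1)[OF M(1) v(1)] v(1) by auto
    then show "forces M v c" using fbc v by auto
  qed
  have rest: "forces M r F" if "F \<in># S" "F \<noteq> X" for F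
    using f that by (simp add: in_diff_count)
  show ?thesis unfolding Good_def
  proof (intro conjI ballI impI)
    fix F assume "F \<in># S" "\<not> is_box F"
    then show "forces M r F" using fX rest by blast
  next
    fix g assume "g \<in># ub S"
    then have "Box g \<in># S" by (simp add: in_ub)
    moreover have "Box g \<noteq> X" using X by simp
    ultimately show "forces M r g \<or> forces M r (Box g)" using rest by blast
  qed
qed

lemma goodBI: assumes Y: "Y = Imp (Box a) b" "Y \<in># S" and R: "rooted M r"
  and f: "\<forall>F\<in>#nb (S - {#Y#}) + ub (S - {#Y#}) + {#b, Box a#}. forces M r F"
  shows "Good S M r" and "\<forall>g\<in>#ub S. forces M r g"
proof -
  let ?T = "S - {#Y#}"
  have S: "S = add_mset Y ?T" using Y by simp
  have M: "valid M" "r \<in> Wd M" using R unfolding rooted_def by auto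
  have fb: "forces M r b" using f by auto
  have fY: "forces M r Y" unfolding Y(1) forces.simps(5)[of M r]
    using persist[OF M(1) M(2) _ _ fb] by blast
  have ubS: "ub S = ub ?T" using S Y(1) by (metis is_box_simps(6) ub_add)
  show g: "\<forall>g\<in>#ub S. forces M r g" using f ubS by auto
  show "Good S M r" unfolding Good_def
  proof (intro conjI ballI impI)
    fix F assume F: "F \<in># S" "\<not> is_box F"
    show "forces M r F"
    proof (cases "F = Y")
      case True then show ?thesis using fY by simp
    next
      case False
      then have "F \<in># ?T" using F by (simp add: in_diff_count)
      then have "F \<in># nb ?T" using F unfolding nb_def set_mset_filter by blast
      then show ?thesis using f by auto
    qed
  next
    fix g assume "g \<in># ub S"
    then show "forces M r g \<or> forces M r (Box g)" using g by blast
  qed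
qed

lemma goodS: assumes "\<forall>F\<in>#S. forces M r F" shows "Good S M r"
  unfolding Good_def
proof (intro conjI ballI impI)
  fix F assume "F \<in># S" then show "forces M r F" using assms by blast
next
  fix g assume "g \<in># ub S"
  then have "Box g \<in># S" by (simp add: in_ub)
  then have "forces M r (Box g)" using assms by blast
  then show "forces M r g \<or> forces M r (Box g)" ..
qed

lemma goodSLtR: "\<forall>F\<in>#nb S + ub S + {#Box a#}. forces M r F \<Longrightarrow> Good S M r \<and> (\<forall>g\<in>#ub S. forces M r g)"
  unfolding Good_def by (auto simp: nb_def)


lemma step_irred:
  assumes IH: "\<And>S' C'. smaller S' C' S C \<Longrightarrow> G4iSLt S' C' \<or> refut S' C'"
  and nBot: "Bot \<notin># S"
  and nAnd: "\<And>a b. And a b \<notin># S" and nOr: "\<And>a b. Or a b \<notin># S"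
  and nVI: "\<And>p \<phi>. Var p \<in># S \<Longrightarrow> Imp (Var p) \<phi> \<notin># S"
  and nAI: "\<And>a b c. Imp (And a b) c \<notin># S" and nOI: "\<And>a b c. Imp (Or a b) c \<notin># S"
  and nId: "\<And>p. C = Var p \<Longrightarrow> Var p \<notin># S"
  and nCA: "\<And>a b. C \<noteq> And a b" and nCI: "\<And>a b. C \<noteq> Imp a b"
  shows "G4iSLt S C \<or> refut S C"
proof (rule ccontr)
  assume "\<not> (G4iSLt S C \<or> refut S C)"
  then have np: "\<not> G4iSLt S C" and nr: "\<not> refut S C" by auto
  have fII: "refut (add_mset a (add_mset (Imp b c) (S - {#X#}))) b"
    if X: "X = Imp (Imp a b) c" "X \<in># S" for X a b c
  proof -
    have S: "S = add_mset (Imp (Imp a b) c) (S - {#X#})" using X by simp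
    have "G4iSLt (add_mset c (S - {#X#})) C \<or> refut (add_mset c (S - {#X#})) C"
      using IH[OF sm_II2[OF S]] .
    moreover have "\<not> refut (add_mset c (S - {#X#})) C" using semImp2[OF X(1) X(2)] nr by blast
    ultimately have p2: "G4iSLt (add_mset c (S - {#X#})) C" by blast
    have "G4iSLt (add_mset a (add_mset (Imp b c) (S - {#X#}))) b \<or> refut (add_mset a (add_mset (Imp b c) (S - {#X#}))) b"
      using IH[OF sm_II1[OF S]] .
    moreover have "\<not> G4iSLt (add_mset a (add_mset (Imp b c) (S - {#X#}))) b"
      using pr_II[OF p2] np S by metis
    ultimately show ?thesis by blast
  qed
  have fBI: "refut (nb (S - {#Y#}) + ub (S - {#Y#}) + {#b, Box a#}) a"
    if Y: "Y = Imp (Box a) b" "Y \<in># S" for Y a b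
  proof -
    have S: "S = add_mset (Imp (Box a) b) (S - {#Y#})" using Y by simp
    have "G4iSLt (add_mset b (S - {#Y#})) C \<or> refut (add_mset b (S - {#Y#})) C"
      using IH[OF sm_BI2[OF S]] .
    moreover have "\<not> refut (add_mset b (S - {#Y#})) C" using semImp2[OF Y(1) Y(2)] nr by blast
    ultimately have p2: "G4iSLt (add_mset b (S - {#Y#})) C" by blast
    have "G4iSLt (nb (S - {#Y#}) + ub (S - {#Y#}) + {#b, Box a#}) a \<or> refut (nb (S - {#Y#}) + ub (S - {#Y#}) + {#b, Box a#}) a"
      using IH[OF sm_BI1[OF S]] .
    moreover have "\<not> G4iSLt (nb (S - {#Y#}) + ub (S - {#Y#}) + {#b, Box a#}) a"
      using pr_BI[OF p2] np S by metis
    ultimately show ?thesis by blast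
  qed
  let ?XS = "{X. X \<in># S \<and> (\<exists>a b c. X = Imp (Imp a b) c)}"
  let ?YS = "{Y. Y \<in># S \<and> (\<exists>a b. Y = Imp (Box a) b)}"
  have "\<forall>X\<in>?XS. \<exists>m. rooted (fst m) (snd m) \<and> Good S (fst m) (snd m) \<and>
       (\<exists>a b c. X = Imp (Imp a b) c \<and> forces (fst m) (snd m) a \<and> \<not> forces (fst m) (snd m) b)"
  proof
    fix X assume "X \<in> ?XS"
    then obtain a b c where X: "X = Imp (Imp a b) c" "X \<in># S" by blast
    obtain M r where Mr: "rooted M r" "\<forall>F\<in>#add_mset a (add_mset (Imp b c) (S - {#X#})). forces M r F" "\<not> forces M r b"
      using refut_rooted[OF fII[OF X]] by blast
    have "Good S M r" using goodII[OF X Mr(1) Mr(2)] .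
    moreover have "forces M r a" using Mr(2) by simp
    ultimately show "\<exists>m. rooted (fst m) (snd m) \<and> Good S (fst m) (snd m) \<and>
       (\<exists>a b c. X = Imp (Imp a b) c \<and> forces (fst m) (snd m) a \<and> \<not> forces (fst m) (snd m) b)"
      using Mr(1) Mr(3) X by (intro exI[of _ "(M, r)"]) auto
  qed
  then obtain f1 where f1: "\<forall>X\<in>?XS. rooted (fst (f1 X)) (snd (f1 X)) \<and> Good S (fst (f1 X)) (snd (f1 X)) \<and>
       (\<exists>a b c. X = Imp (Imp a b) c \<and> forces (fst (f1 X)) (snd (f1 X)) a \<and> \<not> forces (fst (f1 X)) (snd (f1 X)) b)"
    by (metis (no_types, lifting) bchoice)
  have "\<forall>Y\<in>?YS. \<exists>m. rooted (fst m) (snd m) \<and> Good S (fst m) (snd m) \<and>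
       (\<exists>a b. Y = Imp (Box a) b \<and> (\<forall>g\<in>#ub S. forces (fst m) (snd m) g) \<and> \<not> forces (fst m) (snd m) a)"
  proof
    fix Y assume "Y \<in> ?YS"
    then obtain a b where Y: "Y = Imp (Box a) b" "Y \<in># S" by blast
    obtain M r where Mr: "rooted M r" "\<forall>F\<in>#nb (S - {#Y#}) + ub (S - {#Y#}) + {#b, Box a#}. forces M r F" "\<not> forces M r a"
      using refut_rooted[OF fBI[OF Y]] by blast
    have "Good S M r" "\<forall>g\<in>#ub S. forces M r g" using goodBI[OF Y Mr(1) Mr(2)] by auto
    then show "\<exists>m. rooted (fst m) (snd m) \<and> Good S (fst m) (snd m) \<and>
       (\<exists>a b. Y = Imp (Box a) b \<and> (\<forall>g\<in>#ub S. forces (fst m) (snd m) g) \<and> \<not> forces (fst m) (snd m) a)"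
      using Mr(1) Mr(3) Y by (intro exI[of _ "(M, r)"]) auto
  qed
  then obtain f2 where f2: "\<forall>Y\<in>?YS. rooted (fst (f2 Y)) (snd (f2 Y)) \<and> Good S (fst (f2 Y)) (snd (f2 Y)) \<and>
       (\<exists>a b. Y = Imp (Box a) b \<and> (\<forall>g\<in>#ub S. forces (fst (f2 Y)) (snd (f2 Y)) g) \<and> \<not> forces (fst (f2 Y)) (snd (f2 Y)) a)"
    by (metis (no_types, lifting) bchoice)
  have finX: "finite ?XS" by (rule finite_subset[of _ "set_mset S"]) auto
  have finY: "finite ?YS" by (rule finite_subset[of _ "set_mset S"]) auto
  obtain xs where xs: "set xs = ?XS" using finite_list[OF finX] by blast
  obtain ys where ys: "set ys = ?YS" using finite_list[OF finY] by blast
  have "\<exists>ms3. (\<forall>m\<in>set ms3. rooted (fst m) (snd m) \<and> Good S (fst m) (snd m)) \<and>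
     (\<forall>a b. C = Or a b \<longrightarrow> (\<exists>m\<in>set ms3. \<not> forces (fst m) (snd m) a) \<and> (\<exists>m\<in>set ms3. \<not> forces (fst m) (snd m) b))"
  proof (cases "\<exists>a b. C = Or a b")
    case False then show ?thesis by (intro exI[of _ "[]"]) auto
  next
    case True
    then obtain a b where C: "C = Or a b" by blast
    have ra: "refut S a"
    proof -
      have "G4iSLt S a \<or> refut S a" using IH sm_Or1 C by blast
      moreover have "\<not> G4iSLt S a" using np C G4iSLt.OrR1 by blast
      ultimately show ?thesis by blast
    qed
    have rb: "refut S b"
    proof -
      have "G4iSLt S b \<or> refut S b" using IH sm_Or2 C by blast
      moreover have "\<not> G4iSLt S b" using np C G4iSLt.OrR2 by blast
      ultimately show ?thesis by blast
    qed
    obtain M1 r1 where m1: "rooted M1 r1" "\<forall>F\<in>#S. forces M1 r1 F" "\<not> forces M1 r1 a" using refut_rooted[OF ra] by blast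
    obtain M2 r2 where m2: "rooted M2 r2" "\<forall>F\<in>#S. forces M2 r2 F" "\<not> forces M2 r2 b" using refut_rooted[OF rb] by blast
    show ?thesis using m1 m2 goodS[OF m1(2)] goodS[OF m2(2)] C
      by (intro exI[of _ "[(M1, r1), (M2, r2)]"]) auto
  qed
  then obtain ms3 where ms3: "\<forall>m\<in>set ms3. rooted (fst m) (snd m) \<and> Good S (fst m) (snd m)"
     "\<forall>a b. C = Or a b \<longrightarrow> (\<exists>m\<in>set ms3. \<not> forces (fst m) (snd m) a) \<and> (\<exists>m\<in>set ms3. \<not> forces (fst m) (snd m) b)"
    by blast
  have "\<exists>ms4. (\<forall>m\<in>set ms4. rooted (fst m) (snd m) \<and> Good S (fst m) (snd m)) \<and>
     (\<forall>a. C = Box a \<longrightarrow> (\<exists>m\<in>set ms4. (\<forall>g\<in>#ub S. forces (fst m) (snd m) g) \<and> \<not> forces (fst m) (snd m) a))"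
  proof (cases "\<exists>a. C = Box a")
    case False then show ?thesis by (intro exI[of _ "[]"]) auto
  next
    case True
    then obtain a where C: "C = Box a" by blast
    have nCl: "Box a \<notin> Cl (set_mset S)" using Cl_sound np C by blast
    have "G4iSLt (nb S + ub S + {#Box a#}) a \<or> refut (nb S + ub S + {#Box a#}) a"
      using IH sm_SLtR[OF nCl] C by blast
    moreover have "\<not> G4iSLt (nb S + ub S + {#Box a#}) a" using np C SLtR_gen by blast
    ultimately have ra: "refut (nb S + ub S + {#Box a#}) a" by blast
    obtain M1 r1 where m1: "rooted M1 r1" "\<forall>F\<in>#nb S + ub S + {#Box a#}. forces M1 r1 F" "\<not> forces M1 r1 a"
      using refut_rooted[OF ra] by blast
    show ?thesis using m1 goodSLtR[OF m1(2)] C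
      by (intro exI[of _ "[(M1, r1)]"]) auto
  qed
  then obtain ms4 where ms4: "\<forall>m\<in>set ms4. rooted (fst m) (snd m) \<and> Good S (fst m) (snd m)"
     "\<forall>a. C = Box a \<longrightarrow> (\<exists>m\<in>set ms4. (\<forall>g\<in>#ub S. forces (fst m) (snd m) g) \<and> \<not> forces (fst m) (snd m) a)"
    by blast
  let ?ms = "map f1 xs @ map f2 ys @ ms3 @ ms4"
  have "refut S C"
  proof (rule glue_refut2[of ?ms])
    show "\<forall>m\<in>set ?ms. rooted (fst m) (snd m) \<and> Good S (fst m) (snd m)"
      using f1 f2 ms3(1) ms4(1) xs ys by auto
    show "\<forall>F\<in>#S. (\<exists>p. F = Var p) \<or> (\<exists>g. F = Box g) \<or> (\<exists>\<phi>. F = Imp Bot \<phi>)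
      \<or> (\<exists>p \<phi>. F = Imp (Var p) \<phi> \<and> Var p \<notin># S)
      \<or> (\<exists>a b c. F = Imp (Imp a b) c \<and> (\<exists>m\<in>set ?ms. forces (fst m) (snd m) a \<and> \<not> forces (fst m) (snd m) b))
      \<or> (\<exists>a b. F = Imp (Box a) b \<and> (\<exists>m\<in>set ?ms. (\<forall>g\<in>#ub S. forces (fst m) (snd m) g) \<and> \<not> forces (fst m) (snd m) a))"
    proof
      fix F assume F: "F \<in># S"
      show "(\<exists>p. F = Var p) \<or> (\<exists>g. F = Box g) \<or> (\<exists>\<phi>. F = Imp Bot \<phi>)
      \<or> (\<exists>p \<phi>. F = Imp (Var p) \<phi> \<and> Var p \<notin># S)
      \<or> (\<exists>a b c. F = Imp (Imp a b) c \<and> (\<exists>m\<in>set ?ms. forces (fst m) (snd m) a \<and> \<not> forces (fst m) (snd m) b))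
      \<or> (\<exists>a b. F = Imp (Box a) b \<and> (\<exists>m\<in>set ?ms. (\<forall>g\<in>#ub S. forces (fst m) (snd m) g) \<and> \<not> forces (fst m) (snd m) a))"
      proof (cases F)
        case (Var p) then show ?thesis by blast
      next
        case Bot then show ?thesis using F nBot by simp
      next
        case (And a b) then show ?thesis using F nAnd by blast
      next
        case (Or a b) then show ?thesis using F nOr by blast
      next
        case (Box g) then show ?thesis by blast
      next
        case (Imp A B)
        show ?thesis
        proof (cases A)
          case (Var p)
          then have "Var p \<notin># S" using nVI F Imp by blast
          then show ?thesis using Imp Var by blast
        next
          case Bot then show ?thesis using Imp by blast
        next
          case (And a b) then show ?thesis using F Imp nAI by blast
        next
          case (Or a b) then show ?thesis using F Imp nOI by blast
        next
          case (Imp a b)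
          have FX: "F \<in> ?XS" using F \<open>F = Imp A B\<close> Imp by blast
          then have "f1 F \<in> set ?ms" using xs by auto
          moreover have "forces (fst (f1 F)) (snd (f1 F)) a \<and> \<not> forces (fst (f1 F)) (snd (f1 F)) b"
            using f1 FX \<open>F = Imp A B\<close> Imp by auto
          ultimately show ?thesis using \<open>F = Imp A B\<close> Imp by blast
        next
          case (Box a)
          have FY: "F \<in> ?YS" using F \<open>F = Imp A B\<close> Box by blast
          then have "f2 F \<in> set ?ms" using ys by auto
          moreover have "(\<forall>g\<in>#ub S. forces (fst (f2 F)) (snd (f2 F)) g) \<and> \<not> forces (fst (f2 F)) (snd (f2 F)) a"
            using f2 FY \<open>F = Imp A B\<close> Box by auto
          ultimately show ?thesis using \<open>F = Imp A B\<close> Box by blast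
        qed
      qed
    qed
    show "C = Bot \<or> (\<exists>p. C = Var p \<and> Var p \<notin># S)
      \<or> (\<exists>a b. C = Or a b \<and> (\<exists>m\<in>set ?ms. \<not> forces (fst m) (snd m) a) \<and> (\<exists>m\<in>set ?ms. \<not> forces (fst m) (snd m) b))
      \<or> (\<exists>a. C = Box a \<and> (\<exists>m\<in>set ?ms. (\<forall>g\<in>#ub S. forces (fst m) (snd m) g) \<and> \<not> forces (fst m) (snd m) a))"
    proof (cases C)
      case (Var p) then show ?thesis using nId by blast
    next
      case Bot then show ?thesis by blast
    next
      case (And a b) then show ?thesis using nCA by blast
    next
      case (Imp a b) then show ?thesis using nCI by blast
    next
      case (Or a b)
      then have "(\<exists>m\<in>set ms3. \<not> forces (fst m) (snd m) a) \<and> (\<exists>m\<in>set ms3. \<not> forces (fst m) (snd m) b)" using ms3(2) by blast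
      then show ?thesis using Or by auto
    next
      case (Box a)
      then have "\<exists>m\<in>set ms4. (\<forall>g\<in>#ub S. forces (fst m) (snd m) g) \<and> \<not> forces (fst m) (snd m) a" using ms4(2) by blast
      then show ?thesis using Box by auto
    qed
  qed
  then show False using nr by blast
qed


lemma complete_step:
  assumes IH: "\<And>S' C'. smaller S' C' S C \<Longrightarrow> G4iSLt S' C' \<or> refut S' C'"
  shows "G4iSLt S C \<or> refut S C"
  proof (cases "Bot \<in># S")
    case True
    then obtain T where "S = add_mset Bot T" by (metis multi_member_split)
    then show ?thesis using G4iSLt.BotL by simp
  next
    case nBot: False
    show ?thesis
    proof (cases "\<exists>p. C = Var p \<and> Var p \<in># S")
      case True
      then obtain p T where "C = Var p" "S = add_mset (Var p) T" by (metis multi_member_split)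
      then show ?thesis using G4iSLt.IdP by simp
    next
      case nId: False
      show ?thesis
      proof (cases "\<exists>a b. And a b \<in># S")
        case True
        then obtain a b T where "S = add_mset (And a b) T" by (metis multi_member_split)
        then show ?thesis using step_AndL IH by blast
      next
        case nAnd: False
        show ?thesis
        proof (cases "\<exists>a b. Or a b \<in># S")
          case True
          then obtain a b T where "S = add_mset (Or a b) T" by (metis multi_member_split)
          then show ?thesis using step_OrL IH by blast
        next
          case nOr: False
          show ?thesis
          proof (cases "\<exists>p \<phi>. Var p \<in># S \<and> Imp (Var p) \<phi> \<in># S")
            case True
            then obtain p \<phi> where h: "Var p \<in># S" "Imp (Var p) \<phi> \<in># S" by blast
            then obtain T1 where T1: "S = add_mset (Var p) T1" by (metis multi_member_split)
            then have "Imp (Var p) \<phi> \<in># T1" using h(2) by simp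
            then obtain T where "T1 = add_mset (Imp (Var p) \<phi>) T" by (metis multi_member_split)
            then show ?thesis using step_VarImpL IH T1 by blast
          next
            case nVI: False
            show ?thesis
            proof (cases "\<exists>a b c. Imp (And a b) c \<in># S")
              case True
              then obtain a b c T where "S = add_mset (Imp (And a b) c) T" by (metis multi_member_split)
              then show ?thesis using step_AndImpL IH by blast
            next
              case nAI: False
              show ?thesis
              proof (cases "\<exists>a b c. Imp (Or a b) c \<in># S")
                case True
                then obtain a b c T where "S = add_mset (Imp (Or a b) c) T" by (metis multi_member_split)
                then show ?thesis using step_OrImpL IH by blast
              next
                case nOI: False
                show ?thesis
                proof (cases "\<exists>a b. C = And a b")
                  case True
                  then show ?thesis using step_AndR IH by blast
                next
                  case nCA: False
                  show ?thesis
                  proof (cases "\<exists>a b. C = Imp a b")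
                    case True
                    then show ?thesis using step_ImpR IH by blast
                  next
                    case nCI: False
                    show ?thesis
                      by (rule step_irred) (use IH nBot nId nAnd nOr nVI nAI nOI nCA nCI in blast)+
                  qed
                qed
              qed
            qed
          qed
        qed
      qed
    qed
qed

lemma complete: "G4iSLt S C \<or> refut S C"
proof -
  let ?P = "\<lambda>x. \<forall>S C. (mu S C, wsum S C) = x \<longrightarrow> G4iSLt S C \<or> refut S C"
  have "?P x" for x
  proof (rule wf_induct[OF wf_lex_prod[OF wf_less_than wf_less_than], of ?P])
    fix x assume IHx: "\<forall>y. (y, x) \<in> less_than <*lex*> less_than \<longrightarrow> ?P y"
    show "?P x"
    proof (intro allI impI)
      fix S C assume x: "(mu S C, wsum S C) = x"
      show "G4iSLt S C \<or> refut S C"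
      proof (rule complete_step)
        fix S' C' assume "smaller S' C' S C"
        then show "G4iSLt S' C' \<or> refut S' C'" using IHx x unfolding smaller_def by blast
      qed
    qed
  qed
  then show ?thesis by blast
qed

theorem mainTheorem3:
  fixes \<Gamma> :: "form set" and \<phi> :: form
  assumes "iSLH \<Gamma> \<phi>"
  shows "\<exists>\<Gamma>' :: form multiset. set_mset \<Gamma>' \<subseteq> \<Gamma> \<and> G4iSLt \<Gamma>' \<phi>"
proof -
  obtain G0 where G0: "finite G0" "G0 \<subseteq> \<Gamma>" "sem G0 \<phi>" using hilbert_sound[OF assms] by blast
  have nr: "\<not> refut (mset_set G0) \<phi>"
  proof
    assume "refut (mset_set G0) \<phi>"
    then obtain M w where M: "valid M" "w \<in> Wd M" "\<forall>F\<in>#mset_set G0. forces M w F" "\<not> forces M w \<phi>"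
      unfolding refut_def by blast
    have "\<forall>g\<in>G0. forces M w g" using M(3) G0(1) by simp
    then show False using G0(3) M unfolding sem_def by blast
  qed
  have "G4iSLt (mset_set G0) \<phi>" using complete[of "mset_set G0" \<phi>] nr by blast
  moreover have "set_mset (mset_set G0) \<subseteq> \<Gamma>" using G0(1) G0(2) by simp
  ultimately show ?thesis by blast
qed


end
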